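(* Let $d\ge1$, $X_1,\dots,X_{2d}$ the Heisenberg vector fields on $\mathbb{R}^{2d+1}$, $0<\lambda\le\Lambda$. Let $G:\mathbb{R}^{2d+1}\times\mathbb{R}\times\mathbb{R}^{2d+1}\times\mathcal{S}_{2d}\to\mathbb{R}$ satisfy $\mathcal{M}^-_{\lambda,\Lambda}(M-N)\le G(x,r,p,M)-G(x,r,p,N)\le\mathcal{M}^+_{\lambda,\Lambda}(M-N)$ for all $(x,r,p)$ and $M,N\in\mathcal{S}_{2d}$ with $N\ge0$. Let $A$ be an index set, $b^\alpha:\mathbb{R}^{2d+1}\to\mathbb{R}^{2d+1}$, $c^\alpha:\mathbb{R}^{2d+1}\to\mathbb{R}$ with $H_i(x,r,p)=\inf_\alpha\{c^\alpha(x)r-b^\alpha(x)\cdot p\}$, $H_s(x,r,p)=\sup_\alpha\{c^\alpha(x)r-b^\alpha(x)\cdot p\}$ finite, $b^\alpha$ locally Lipschitz uniformly in $\alpha$ (for every $R>0$ there is $K_R$ with $\sup_{|x|,|y|\le R,\alpha}|b^\alpha(x)-b^\alpha(y)|\le K_R|x-y|$), and $c^\alpha\ge0$ continuous on each ball uniformly in $\alpha$. Suppose there exist $\gamma_1,\dots,\gamma_{2d+1}\in\mathbb{R}$ with $\gamma_o:=\min_i\gamma_i>0$ such that $$\sup_\alpha b^\alpha(x)\cdot D\rho(x)\le-\sum_{i=1}^{2d+1}\gamma_ix_i\partial_i\rho(x)+o\Big(\frac1{\rho^3}\Big)\quad\text{as }\rho\to\infty.$$ (A) Assume $G(x,r,p,0)\ge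 H_i(x,r,p)$ for all $x,p\in\mathbb{R}^{2d+1}$, $r\in\mathbb{R}$, and let $u\in\mathrm{USC}(\mathbb{R}^{2d+1})$ be a viscosity subsolution of $G(x,u,Du,(D^2_{\mathbb{H}^d}u)^* )=0$ in $\mathbb{R}^{2d+1}$ with $\limsup_{|x|\to\infty}u/\log\rho\le0$. If either $c^\alpha\equiv0$ or $u\ge0$, then $u$ is constant. (B) Assume $G(x,r,p,0)\le H_s(x,r,p)$ for all $x,p,r$, and let $v\in\mathrm{LSC}(\mathbb{R}^{2d+1})$ be a viscosity supersolution of $G(x,v,Dv,(D^2_{\mathbb{H}^d}v)^* )=0$ with $\liminf_{|x|\to\infty}v/\log\rho\ge0$. If either $c^\alpha\equiv0$ or $v\le0$, then $v$ is constant.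
   Context: Heisenberg vector fields: $X_i=\partial_i+2x_{i+d}\partial_{2d+1}$, $X_{i+d}=\partial_{i+d}-2x_i\partial_{2d+1}$, $i=1,\dots,d$. $x_H=(x_1,\dots,x_{2d})$, $\rho(x)=(|x_H|^4+x_{2d+1}^2)^{1/4}$ (homogeneous norm), $D\rho$ its Euclidean gradient. $Du$ is the Euclidean gradient, $(D^2_{\mathbb{H}^d}u)_{ij}=X_i(X_ju)$, $Y^*$ symmetrization; viscosity sense in Euclidean variables. Pucci operators on $\mathcal{S}_{2d}$: $\mathcal{M}^\pm_{\lambda,\Lambda}(M)=\sup/\inf\,\mathrm{Tr}(-AM)$ over symmetric $A$ with $\lambda|\xi|^2\le A\xi\cdot\xi\le\Lambda|\xi|^2$. *)

theory Defs
  imports "HOL-Analysis.Analysis"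
begin

text \<open>Points of R^(2d+1) are triples (a, b, t) with a = (x_1..x_d), b = (x_(d+1)..x_(2d)),
  t = x_(2d+1); the index type 'd has d = CARD('d) elements (so d >= 1 automatically).
  Horizontal indices 1..2d are encoded as Inl k (k = 1..d) and Inr k (k+d).\<close>

type_synonym 'd heis = "(real^'d) \<times> (real^'d) \<times> real"
type_synonym 'd hmat = "real^('d + 'd)^('d + 'd)"

fun hfield :: "('d::finite + 'd) \<Rightarrow> 'd heis \<Rightarrow> 'd heis" where
  "hfield (Inl k) (a, b, t) = (axis k 1, 0, 2 * (b $ k))"
| "hfield (Inr k) (a, b, t) = (0, axis k 1, - 2 * (a $ k))"

definition Xop :: "('d::finite + 'd) \<Rightarrow> ('d heis \<Rightarrow> real) \<Rightarrow> 'd heis \<Rightarrow> real" where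
  "Xop j f x = frechet_derivative f (at x) (hfield j x)"

definition hhess :: "('d::finite heis \<Rightarrow> real) \<Rightarrow> 'd heis \<Rightarrow> 'd hmat" where
  "hhess f x = (\<chi> i j. Xop i (Xop j f) x)"

definition symmetrize :: "'n::finite hmat \<Rightarrow> 'n hmat" where
  "symmetrize M = (1/2) *\<^sub>R (M + transpose M)"

definition egrad :: "('a::euclidean_space \<Rightarrow> real) \<Rightarrow> 'a \<Rightarrow> 'a" where
  "egrad f x = (\<Sum>i\<in>Basis. frechet_derivative f (at x) i *\<^sub>R i)"

definition hnorm :: "'d::finite heis \<Rightarrow> real" where
  "hnorm x = (case x of (a, b, t) \<Rightarrow> ((norm a ^ 2 + norm b ^ 2) ^ 2 + t ^ 2) powr (1/4))"

definition symmetric_mat :: "real^'n::finite^'n \<Rightarrow> bool" where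
  "symmetric_mat M \<longleftrightarrow> transpose M = M"

definition psd :: "real^'n::finite^'n \<Rightarrow> bool" where
  "psd N \<longleftrightarrow> (\<forall>\<xi>. 0 \<le> \<xi> \<bullet> (N *v \<xi>))"

definition ellipt_set :: "real \<Rightarrow> real \<Rightarrow> (real^'n::finite^'n) set" where
  "ellipt_set l L = {A. symmetric_mat A \<and>
      (\<forall>\<xi>. l * norm \<xi> ^ 2 \<le> \<xi> \<bullet> (A *v \<xi>) \<and> \<xi> \<bullet> (A *v \<xi>) \<le> L * norm \<xi> ^ 2)}"

definition pucci_plus :: "real \<Rightarrow> real \<Rightarrow> real^'n^'n \<Rightarrow> real" where
  "pucci_plus l L M = (SUP A\<in>ellipt_set l L. trace (- (A ** M)))"

definition pucci_minus :: "real \<Rightarrow> real \<Rightarrow> real^'n^'n \<Rightarrow> real" where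
  "pucci_minus l L M = (INF A\<in>ellipt_set l L. trace (- (A ** M)))"

definition usc :: "('a::metric_space \<Rightarrow> real) \<Rightarrow> bool" where
  "usc u \<longleftrightarrow> (\<forall>x. \<forall>e>0. \<exists>\<delta>>0. \<forall>y. dist y x < \<delta> \<longrightarrow> u y < u x + e)"

definition lsc :: "('a::metric_space \<Rightarrow> real) \<Rightarrow> bool" where
  "lsc u \<longleftrightarrow> (\<forall>x. \<forall>e>0. \<exists>\<delta>>0. \<forall>y. dist y x < \<delta> \<longrightarrow> u x - e < u y)"

definition C2 :: "('a::euclidean_space \<Rightarrow> real) \<Rightarrow> bool" where
  "C2 f \<longleftrightarrow> (\<exists>(D :: 'a \<Rightarrow> 'a \<Rightarrow>\<^sub>L real) (D2 :: 'a \<Rightarrow> 'a \<Rightarrow>\<^sub>L ('a \<Rightarrow>\<^sub>L real)).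
      (\<forall>x. (f has_derivative blinfun_apply (D x)) (at x)) \<and>
      (\<forall>x. (D has_derivative blinfun_apply (D2 x)) (at x)) \<and> continuous_on UNIV D2)"

definition visc_sub ::
  "('d::finite heis \<Rightarrow> real \<Rightarrow> 'd heis \<Rightarrow> 'd hmat \<Rightarrow> real) \<Rightarrow> ('d heis \<Rightarrow> real) \<Rightarrow> bool" where
  "visc_sub G u \<longleftrightarrow> usc u \<and>
     (\<forall>\<phi> x0. C2 \<phi> \<longrightarrow> (\<exists>e>0. \<forall>y. dist y x0 < e \<longrightarrow> u y - \<phi> y \<le> u x0 - \<phi> x0) \<longrightarrow>
        G x0 (u x0) (egrad \<phi> x0) (symmetrize (hhess \<phi> x0)) \<le> 0)"

definition visc_super ::
  "('d::finite heis \<Rightarrow> real \<Rightarrow> 'd heis \<Rightarrow> 'd hmat \<Rightarrow> real) \<Rightarrow> ('d heis \<Rightarrow> real) \<Rightarrow> bool" where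
  "visc_super G v \<longleftrightarrow> lsc v \<and>
     (\<forall>\<phi> x0. C2 \<phi> \<longrightarrow> (\<exists>e>0. \<forall>y. dist y x0 < e \<longrightarrow> v y - \<phi> y \<ge> v x0 - \<phi> x0) \<longrightarrow>
        G x0 (v x0) (egrad \<phi> x0) (symmetrize (hhess \<phi> x0)) \<ge> 0)"

definition gscale :: "('d::finite \<Rightarrow> real) \<Rightarrow> ('d \<Rightarrow> real) \<Rightarrow> real \<Rightarrow> 'd heis \<Rightarrow> 'd heis" where
  "gscale g1 g2 g3 x = (case x of (a, b, t) \<Rightarrow> ((\<chi> k. g1 k * a $ k), (\<chi> k. g2 k * b $ k), g3 * t))"

end

theory Submission
  imports Defs
begin


lemma C2_const: "C2 (\<lambda>x. c)"
  unfolding C2_def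
  by (rule exI[of _ "\<lambda>x. 0"], rule exI[of _ "\<lambda>x. 0"]) (auto intro!: derivative_eq_intros)

lemma C2_linear: assumes "bounded_linear f" shows "C2 f"
  unfolding C2_def
proof (rule exI[of _ "\<lambda>x. Blinfun f"], rule exI[of _ "\<lambda>x. 0"], intro conjI allI)
  fix x show "(f has_derivative blinfun_apply (Blinfun f)) (at x)"
    using assms by (simp add: bounded_linear_Blinfun_apply bounded_linear_imp_has_derivative)
qed (auto intro!: derivative_eq_intros)

lemma C2_add: assumes "C2 f" "C2 g" shows "C2 (\<lambda>x. f x + g x)"
proof -
  obtain Df D2f where f: "\<forall>x. (f has_derivative blinfun_apply (Df x)) (at x)"
    "\<forall>x. (Df has_derivative blinfun_apply (D2f x)) (at x)" "continuous_on UNIV D2f"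
    using assms(1) unfolding C2_def by blast
  obtain Dg D2g where g: "\<forall>x. (g has_derivative blinfun_apply (Dg x)) (at x)"
    "\<forall>x. (Dg has_derivative blinfun_apply (D2g x)) (at x)" "continuous_on UNIV D2g"
    using assms(2) unfolding C2_def by blast
  show ?thesis unfolding C2_def
    apply (rule exI[of _ "\<lambda>x. Df x + Dg x"], rule exI[of _ "\<lambda>x. D2f x + D2g x"])
    using f g by (auto intro!: derivative_eq_intros continuous_intros simp: blinfun.add_left)
qed

lemma C2_mult: assumes "C2 f" "C2 g" shows "C2 (\<lambda>x. f x * g x)"
proof -
  obtain Df D2f where f: "\<forall>x. (f has_derivative blinfun_apply (Df x)) (at x)"
    "\<forall>x. (Df has_derivative blinfun_apply (D2f x)) (at x)" "continuous_on UNIV D2f"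
    using assms(1) unfolding C2_def by blast
  obtain Dg D2g where g: "\<forall>x. (g has_derivative blinfun_apply (Dg x)) (at x)"
    "\<forall>x. (Dg has_derivative blinfun_apply (D2g x)) (at x)" "continuous_on UNIV D2g"
    using assms(2) unfolding C2_def by blast
  have cf: "continuous_on UNIV f" using f(1)
    by (meson continuous_at_imp_continuous_on has_derivative_continuous)
  have cg: "continuous_on UNIV g" using g(1)
    by (meson continuous_at_imp_continuous_on has_derivative_continuous)
  have cDf: "continuous_on UNIV Df" using f(2)
    by (meson continuous_at_imp_continuous_on has_derivative_continuous)
  have cDg: "continuous_on UNIV Dg" using g(2)
    by (meson continuous_at_imp_continuous_on has_derivative_continuous)
  show ?thesis unfolding C2_def
  proof (rule exI[of _ "\<lambda>x. f x *\<^sub>R Dg x + g x *\<^sub>R Df x"],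
      rule exI[of _ "\<lambda>x. f x *\<^sub>R D2g x + (blinfun_scaleR_left (Dg x) o\<^sub>L Df x)
           + (g x *\<^sub>R D2f x + (blinfun_scaleR_left (Df x) o\<^sub>L Dg x))"], intro conjI allI)
    fix x
    show "((\<lambda>x. f x * g x) has_derivative blinfun_apply (f x *\<^sub>R Dg x + g x *\<^sub>R Df x)) (at x)"
      using f(1) g(1) by (auto intro!: derivative_eq_intros simp: blinfun.add_left blinfun.scaleR_left fun_eq_iff algebra_simps)
    show "((\<lambda>x. f x *\<^sub>R Dg x + g x *\<^sub>R Df x) has_derivative
       blinfun_apply (f x *\<^sub>R D2g x + (blinfun_scaleR_left (Dg x) o\<^sub>L Df x)
           + (g x *\<^sub>R D2f x + (blinfun_scaleR_left (Df x) o\<^sub>L Dg x)))) (at x)"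
      using f g
      by (auto intro!: derivative_eq_intros simp: blinfun.add_left blinfun.scaleR_left fun_eq_iff algebra_simps)
  next
    show "continuous_on UNIV (\<lambda>x. f x *\<^sub>R D2g x + (blinfun_scaleR_left (Dg x) o\<^sub>L Df x)
           + (g x *\<^sub>R D2f x + (blinfun_scaleR_left (Df x) o\<^sub>L Dg x)))"
      using f g cf cg cDf cDg
      by (intro continuous_intros continuous_on_compose2[OF bounded_linear.continuous_on[OF bounded_linear_blinfun_scaleR_left]]) auto
  qed
qed


lemma C2_comp:
  assumes h: "C2 h" and S: "open S" "\<And>x. h x \<in> S"
    and F1: "\<And>t. t \<in> S \<Longrightarrow> (F has_real_derivative F1 t) (at t)"
    and F2: "\<And>t. t \<in> S \<Longrightarrow> (F1 has_real_derivative F2 t) (at t)"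
    and cF2: "continuous_on S F2"
  shows "C2 (\<lambda>x. F (h x))"
proof -
  obtain Dh D2h where f: "\<forall>x. (h has_derivative blinfun_apply (Dh x)) (at x)"
    "\<forall>x. (Dh has_derivative blinfun_apply (D2h x)) (at x)" "continuous_on UNIV D2h"
    using h unfolding C2_def by blast
  have ch: "continuous_on UNIV h" using f(1)
    by (meson continuous_at_imp_continuous_on has_derivative_continuous)
  have cDh: "continuous_on UNIV Dh" using f(2)
    by (meson continuous_at_imp_continuous_on has_derivative_continuous)
  have cF2h: "continuous_on UNIV (\<lambda>x. F2 (h x))"
    by (rule continuous_on_compose2[OF cF2 ch]) (use S in auto)
  show ?thesis unfolding C2_def
  proof (rule exI[of _ "\<lambda>x. F1 (h x) *\<^sub>R Dh x"],
      rule exI[of _ "\<lambda>x. F1 (h x) *\<^sub>R D2h x + F2 (h x) *\<^sub>R (blinfun_scaleR_left (Dh x) o\<^sub>L Dh x)"], intro conjI allI)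
    fix x
    have d1: "((\<lambda>x. F (h x)) has_derivative (\<lambda>v. Dh x v * F1 (h x))) (at x)"
      by (rule DERIV_compose_FDERIV[OF F1[OF S(2)] f(1)[rule_format]])
    show "((\<lambda>x. F (h x)) has_derivative blinfun_apply (F1 (h x) *\<^sub>R Dh x)) (at x)"
      using d1 by (simp add: scaleR_blinfun.rep_eq mult.commute)
    have d2: "((\<lambda>x. F1 (h x)) has_derivative (\<lambda>v. Dh x v * F2 (h x))) (at x)"
      by (rule DERIV_compose_FDERIV[OF F2[OF S(2)] f(1)[rule_format]])
    show "((\<lambda>x. F1 (h x) *\<^sub>R Dh x) has_derivative blinfun_apply
       (F1 (h x) *\<^sub>R D2h x + F2 (h x) *\<^sub>R (blinfun_scaleR_left (Dh x) o\<^sub>L Dh x))) (at x)"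
    proof -
      have e: "blinfun_apply (F1 (h x) *\<^sub>R D2h x + F2 (h x) *\<^sub>R (blinfun_scaleR_left (Dh x) o\<^sub>L Dh x))
        = (\<lambda>k. F1 (h x) *\<^sub>R blinfun_apply (D2h x) k + (Dh x k * F2 (h x)) *\<^sub>R Dh x)"
        by (simp add: fun_eq_iff plus_blinfun.rep_eq scaleR_blinfun.rep_eq mult.commute)
      show ?thesis unfolding e by (rule has_derivative_scaleR[OF d2 f(2)[rule_format]])
    qed
  next
    show "continuous_on UNIV (\<lambda>x. F1 (h x) *\<^sub>R D2h x + F2 (h x) *\<^sub>R (blinfun_scaleR_left (Dh x) o\<^sub>L Dh x))"
    proof -
      have cF1h: "continuous_on UNIV (\<lambda>x. F1 (h x))"
        by (rule continuous_on_compose2[of S F1 UNIV h])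
          (use F2 ch S in \<open>auto intro: DERIV_continuous continuous_at_imp_continuous_on\<close>)
      show ?thesis using cF1h cF2h f(3) cDh
        by (intro continuous_intros continuous_on_compose2[OF bounded_linear.continuous_on[OF bounded_linear_blinfun_scaleR_left]]) auto
    qed
  qed
qed

lemma C2_sum: assumes "finite I" "\<And>i. i \<in> I \<Longrightarrow> C2 (f i)" shows "C2 (\<lambda>x. \<Sum>i\<in>I. f i x)"
  using assms by (induction I rule: finite_induct) (auto intro: C2_add C2_const)

lemma C2_cmult: "C2 f \<Longrightarrow> C2 (\<lambda>x. c * f x)"
  using C2_mult[OF C2_const] by blast

lemma C2_diff: "C2 f \<Longrightarrow> C2 g \<Longrightarrow> C2 (\<lambda>x. f x - g x)"
  using C2_add[of f "\<lambda>x. (-1) * g x"] C2_cmult[of g "-1"] by simp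

lemma C2_norm2: fixes f :: "'a::euclidean_space \<Rightarrow> 'b::euclidean_space"
  assumes "bounded_linear f" shows "C2 (\<lambda>x. norm (f x - c) ^ 2)"
proof -
  have e: "norm (f x - c) ^ 2 = (\<Sum>i\<in>Basis. (f x \<bullet> i - c \<bullet> i) * (f x \<bullet> i - c \<bullet> i))" for x
    by (simp only: power2_norm_eq_inner euclidean_inner[of "f x - c" "f x - c"]) (simp add: inner_diff_left)
  have l: "C2 (\<lambda>x. f x \<bullet> i - c \<bullet> i)" for i
    by (intro C2_diff C2_const C2_linear bounded_linear_inner_left_comp assms)
  show ?thesis unfolding e by (intro C2_sum C2_mult l) auto
qed



definition hlin :: "('d::finite + 'd) \<Rightarrow> 'd heis \<Rightarrow> 'd heis" where
  "hlin j v = (case j of Inl k \<Rightarrow> (0, 0, 2 * (fst (snd v)) $ k) | Inr k \<Rightarrow> (0, 0, -2 * (fst v) $ k))"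

lemma hfield_eq: "hfield j y = hfield j 0 + hlin j y"
  by (cases j; cases y) (auto simp: hlin_def zero_prod_def)

lemma hlin_linear: "bounded_linear (hlin j)"
  unfolding linear_conv_bounded_linear[symmetric]
  by (cases j) (auto simp: linear_iff hlin_def algebra_simps)

lemma hfield_deriv: "(hfield j has_derivative hlin j) (at y)"
proof -
  have "((\<lambda>y. hfield j 0 + hlin j y) has_derivative hlin j) (at y)"
    using hlin_linear by (auto intro!: derivative_eq_intros bounded_linear_imp_has_derivative)
  then show ?thesis by (subst hfield_eq[abs_def]) simp
qed

lemma hfield_cont: "continuous_on UNIV (hfield j)"
  using hfield_deriv by (meson continuous_at_imp_continuous_on has_derivative_continuous)

lemma Xop_eq: "(f has_derivative f') (at y) \<Longrightarrow> Xop j f y = f' (hfield j y)"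
  unfolding Xop_def by (simp add: frechet_derivative_at[symmetric])

lemma Xop_fun: "(\<And>y. (f has_derivative f' y) (at y)) \<Longrightarrow> Xop j f = (\<lambda>y. f' y (hfield j y))"
  using Xop_eq by blast

lemma hhess_comp:
  assumes h: "\<And>y. h differentiable (at y)" and hX: "\<And>j. Xop j h differentiable (at x)"
    and S: "\<And>y. h y \<in> S"
    and F1: "\<And>t. t \<in> S \<Longrightarrow> (F has_real_derivative F1 t) (at t)"
    and F2: "\<And>t. t \<in> S \<Longrightarrow> (F1 has_real_derivative F2 t) (at t)"
  shows "hhess (\<lambda>y. F (h y)) x = (\<chi> i j. F1 (h x) * hhess h x $ i $ j + F2 (h x) * (Xop i h x * Xop j h x))"
proof -
  have hd: "(h has_derivative frechet_derivative h (at y)) (at y)" for y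
    using h frechet_derivative_works by blast
  have X1: "Xop j (\<lambda>y. F (h y)) = (\<lambda>y. F1 (h y) * Xop j h y)" for j
  proof
    fix y
    have "((\<lambda>y. F (h y)) has_derivative (\<lambda>v. frechet_derivative h (at y) v * F1 (h y))) (at y)"
      by (rule DERIV_compose_FDERIV[OF F1[OF S] hd])
    then show "Xop j (\<lambda>y. F (h y)) y = F1 (h y) * Xop j h y"
      by (simp add: Xop_eq[OF _] Xop_eq[OF hd])
  qed
  have X2: "Xop i (\<lambda>y. F1 (h y) * Xop j h y) x = F1 (h x) * Xop i (Xop j h) x + F2 (h x) * (Xop i h x * Xop j h x)" for i j
  proof -
    have g: "(Xop j h has_derivative frechet_derivative (Xop j h) (at x)) (at x)"
      using hX frechet_derivative_works by blast
    have d: "((\<lambda>y. F1 (h y)) has_derivative (\<lambda>v. frechet_derivative h (at x) v * F2 (h x))) (at x)"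
      by (rule DERIV_compose_FDERIV[OF F2[OF S] hd])
    have "((\<lambda>y. F1 (h y) * Xop j h y) has_derivative
      (\<lambda>v. F1 (h x) * frechet_derivative (Xop j h) (at x) v + frechet_derivative h (at x) v * F2 (h x) * Xop j h x)) (at x)"
      by (rule has_derivative_mult[OF d g])
    then show ?thesis
      by (simp add: Xop_eq Xop_eq[OF g] Xop_eq[OF hd] algebra_simps)
  qed
  show ?thesis unfolding hhess_def X1 X2 by simp
qed

lemma egrad_inner: assumes "(f has_derivative f') (at x)" shows "egrad f x \<bullet> v = f' v"
proof -
  have l: "linear f'" using assms has_derivative_linear by blast
  have "egrad f x = (\<Sum>i\<in>Basis. f' i *\<^sub>R i)"
    unfolding egrad_def using assms frechet_derivative_at by metis
  then have "egrad f x \<bullet> v = (\<Sum>i\<in>Basis. (v \<bullet> i) * f' i)"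
    by (simp add: inner_sum_right inner_commute mult.commute)
  also have "\<dots> = f' (\<Sum>i\<in>Basis. (v \<bullet> i) *\<^sub>R i)"
    by (simp add: linear_sum[OF l] linear_scale[OF l])
  finally show ?thesis by (simp add: euclidean_representation)
qed

lemma egrad_eq: assumes "(f has_derivative f') (at x)" and "\<And>v. f' v = g \<bullet> v" shows "egrad f x = g"
proof -
  have "egrad f x \<bullet> v = g \<bullet> v" for v using egrad_inner[OF assms(1)] assms(2) by simp
  then show ?thesis by (metis euclidean_eqI inner_commute)
qed

lemma C2_differentiable: assumes "C2 f" shows "f differentiable (at y)"
  using assms unfolding C2_def differentiable_def by blast

lemma C2_Xop_differentiable: assumes "C2 f" shows "Xop j f differentiable (at y)"
proof -
  obtain Df D2f where f: "\<forall>x. (f has_derivative blinfun_apply (Df x)) (at x)"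
    "\<forall>x. (Df has_derivative blinfun_apply (D2f x)) (at x)"
    using assms unfolding C2_def by blast
  have X: "Xop j f = (\<lambda>y. blinfun_apply (Df y) (hfield j y))"
    by (rule Xop_fun) (use f in auto)
  show ?thesis unfolding X differentiable_def
    using blinfun.FDERIV[OF f(2)[rule_format] hfield_deriv] by blast
qed

lemma Xop_neg: assumes "\<And>y. f differentiable (at y)" shows "Xop j (\<lambda>y. - f y) = (\<lambda>y. - Xop j f y)"
proof
  fix y
  have hd: "(f has_derivative frechet_derivative f (at y)) (at y)"
    using assms frechet_derivative_works by blast
  show "Xop j (\<lambda>y. - f y) y = - Xop j f y"
    using Xop_eq[OF has_derivative_minus[OF hd]] Xop_eq[OF hd] by simp
qed

lemma hhess_neg: assumes "C2 f" shows "hhess (\<lambda>y. - f y) x = - hhess f x"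
  unfolding hhess_def Xop_neg[OF C2_differentiable[OF assms]] 
  by (subst Xop_neg) (auto simp: C2_Xop_differentiable[OF assms] vec_eq_iff)

lemma egrad_neg: assumes "C2 f" shows "egrad (\<lambda>y. - f y) x = - egrad f x"
proof -
  have hd: "(f has_derivative frechet_derivative f (at x)) (at x)"
    using C2_differentiable[OF assms] frechet_derivative_works by blast
  show ?thesis unfolding egrad_def
    using frechet_derivative_at[OF has_derivative_minus[OF hd], symmetric]
    by (simp add: sum_negf[symmetric])
qed



definition outer :: "real^'n \<Rightarrow> real^'n^'n" where
  "outer g = (\<chi> i j. g $ i * g $ j)"

lemma trace_mm: "trace (A ** M) = (\<Sum>i\<in>UNIV. \<Sum>k\<in>UNIV. A$i$k * M$k$i)"
  by (simp add: trace_def matrix_matrix_mult_def)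

lemma trace_neg: "trace (- (M::real^'n^'n)) = - trace M"
  by (simp add: trace_def sum_negf)

lemma quad_form: "\<xi> \<bullet> (A *v \<xi>) = (\<Sum>i\<in>UNIV. \<Sum>k\<in>UNIV. A$i$k * \<xi>$k * \<xi>$i)"
  by (simp add: inner_vec_def matrix_vector_mult_def sum_distrib_left mult_ac)

lemma E_mat: assumes "l \<le> L" shows "mat l \<in> ellipt_set l L"
proof -
  have m: "mat l *v \<xi> = l *\<^sub>R \<xi>" for \<xi> :: "real^'n"
  proof -
    have mi: "(if P then a else (0::real)) * b = (if P then a * b else 0)" for P a b by simp
    show ?thesis by (simp add: matrix_vector_mult_def mat_def vec_eq_iff mi)
  qed
  have q: "\<xi> \<bullet> (mat l *v \<xi>) = l * norm \<xi> ^ 2" for \<xi> :: "real^'n"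
    by (simp add: m power2_norm_eq_inner)
  show ?thesis using assms unfolding ellipt_set_def symmetric_mat_def
    by (simp add: transpose_mat q mult_right_mono)
qed

lemma E_sym: "A \<in> ellipt_set l L \<Longrightarrow> A $ i $ j = A $ j $ i"
  by (auto simp: ellipt_set_def symmetric_mat_def transpose_def vec_eq_iff)

lemma E_lower: "A \<in> ellipt_set l L \<Longrightarrow> l * norm \<xi> ^ 2 \<le> \<xi> \<bullet> (A *v \<xi>)"
  by (auto simp: ellipt_set_def)

lemma E_upper: "A \<in> ellipt_set l L \<Longrightarrow> \<xi> \<bullet> (A *v \<xi>) \<le> L * norm \<xi> ^ 2"
  by (auto simp: ellipt_set_def)

lemma axis_quad: "(axis i 1 + s *\<^sub>R axis j 1) \<bullet> (A *v (axis i 1 + s *\<^sub>R axis j 1))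
   = A$i$i + s * A$i$j + s * A$j$i + s * s * A$j$j"
  by (simp add: matrix_vector_mult_basis inner_add_left inner_add_right matrix_vector_right_distrib
      matrix_vector_mult_scaleR inner_axis' column_def algebra_simps)

lemma E_entry: assumes A: "A \<in> ellipt_set l L" and l: "0 \<le> l" shows "\<bar>A $ i $ j\<bar> \<le> L"
proof (cases "i = j")
  case True
  have "l * norm (axis j (1::real)) ^ 2 \<le> axis j 1 \<bullet> (A *v axis j 1)"
       "axis j 1 \<bullet> (A *v axis j 1) \<le> L * norm (axis j (1::real)) ^ 2"
    using E_lower[OF A] E_upper[OF A] by blast+
  moreover have "axis j 1 \<bullet> (A *v axis j 1) = A $ j $ j"
    by (simp add: matrix_vector_mult_basis inner_axis' column_def)
  ultimately show ?thesis using True l by (simp add: norm_axis_1)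
next
  case False
  have n: "norm (axis i 1 + s *\<^sub>R axis j (1::real)) ^ 2 = 1 + s * s" for s :: real
    using False by (simp add: power2_norm_eq_inner inner_add_left inner_add_right inner_axis_axis)
  have ii: "0 \<le> A$i$i" "0 \<le> A$j$j"
    using E_lower[OF A, of "axis i 1"] E_lower[OF A, of "axis j 1"] l
    by (auto simp: matrix_vector_mult_basis inner_axis' column_def norm_axis_1)
  have "axis_quad1": "A$i$i + 1 * A$i$j + 1 * A$j$i + 1 * 1 * A$j$j \<le> L * (1 + 1 * 1)"
    using E_upper[OF A, of "axis i 1 + 1 *\<^sub>R axis j 1"] unfolding axis_quad n .
  have "axis_quad2": "A$i$i + (-1) * A$i$j + (-1) * A$j$i + (-1) * (-1) * A$j$j \<le> L * (1 + (-1) * (-1))"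
    using E_upper[OF A, of "axis i 1 + (-1) *\<^sub>R axis j 1"] unfolding axis_quad n .
  show ?thesis using axis_quad1 axis_quad2 ii E_sym[OF A, of i j] by auto
qed

lemma E_trace_bound: assumes A: "A \<in> ellipt_set l L" and l: "0 \<le> l"
  shows "\<bar>trace (A ** M)\<bar> \<le> L * (\<Sum>i\<in>UNIV. \<Sum>k\<in>UNIV. \<bar>M$i$k\<bar>)"
proof -
  have "\<bar>trace (A ** M)\<bar> \<le> (\<Sum>i\<in>UNIV. \<Sum>k\<in>UNIV. \<bar>A$i$k * M$k$i\<bar>)"
    unfolding trace_mm by (rule order_trans[OF sum_abs]) (intro sum_mono sum_abs)
  also have "\<dots> \<le> (\<Sum>i\<in>UNIV. \<Sum>k\<in>UNIV. L * \<bar>M$k$i\<bar>)"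
    by (intro sum_mono) (auto simp: abs_mult intro!: mult_right_mono E_entry[OF A l])
  also have "\<dots> = L * (\<Sum>i\<in>UNIV. \<Sum>k\<in>UNIV. \<bar>M$i$k\<bar>)"
    by (subst sum.swap) (simp add: sum_distrib_left)
  finally show ?thesis .
qed

lemma trace_outer: "trace (A ** outer g) = g \<bullet> (A *v g)"
  by (simp add: trace_mm outer_def quad_form mult.commute mult.left_commute)

lemma ts: "trace (c *\<^sub>R X) = c * trace (X::real^'n^'n)"
    by (simp add: trace_def sum_distrib_left)
lemma ms: "(A::real^'n^'n) ** (c *\<^sub>R X) = c *\<^sub>R (A ** X)"
    by (simp add: matrix_matrix_mult_def vec_eq_iff sum_distrib_left mult_ac)

lemma trace_sym: assumes "symmetric_mat A" shows "trace (A ** symmetrize M) = trace (A ** M)"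
proof -
  have s: "A$i$k = A$k$i" for i k using assms by (auto simp: symmetric_mat_def transpose_def vec_eq_iff)
  have "trace (A ** transpose M) = trace (A ** M)"
    unfolding trace_mm transpose_def
    by (simp, subst sum.swap) (simp add: s)
  show ?thesis
    unfolding symmetrize_def ms ts matrix_add_ldistrib trace_add \<open>trace (A ** transpose M) = trace (A ** M)\<close>
    by simp
qed

lemma symmetrize_sym: "symmetric_mat (symmetrize M)"
  by (auto simp: symmetric_mat_def symmetrize_def transpose_def vec_eq_iff)



definition KP :: "real \<Rightarrow> real \<Rightarrow> ('a \<Rightarrow> 'd::finite heis \<Rightarrow> 'd heis) \<Rightarrow> ('d heis \<Rightarrow> real) \<Rightarrow> bool" where
  "KP l L b u \<longleftrightarrow> (\<forall>\<phi> x0 m1 m2. C2 \<phi> \<longrightarrow> (\<exists>e>0. \<forall>y. dist y x0 < e \<longrightarrow> u y - \<phi> y \<le> u x0 - \<phi> x0) \<longrightarrow>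
     (\<forall>A\<in>ellipt_set l L. m1 \<le> - trace (A ** hhess \<phi> x0)) \<longrightarrow>
     (\<forall>\<alpha>. m2 \<le> - (b \<alpha> x0 \<bullet> egrad \<phi> x0)) \<longrightarrow> m1 + m2 \<le> 0)"

lemma mneg: "(A::real^'n^'n) ** (- H) = - (A ** H)"
  by (simp add: vec_eq_iff matrix_matrix_mult_def sum_negf)

lemma sym0: "symmetric_mat (0::real^'n^'n)" by (simp add: symmetric_mat_def transpose_def vec_eq_iff)
lemma psd0: "psd (0::real^'n^'n)" by (simp add: psd_def)

lemma KP_sub:
  fixes G :: "'d::finite heis \<Rightarrow> real \<Rightarrow> 'd heis \<Rightarrow> 'd hmat \<Rightarrow> real"
  assumes lL: "0 < l" "l \<le> L"
    and G_ell: "\<And>x r p M N. symmetric_mat M \<Longrightarrow> symmetric_mat N \<Longrightarrow> psd N \<Longrightarrow>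
        pucci_minus l L (M - N) \<le> G x r p M - G x r p N \<and>
        G x r p M - G x r p N \<le> pucci_plus l L (M - N)"
    and G0: "\<forall>x r p. G x r p 0 \<ge> (INF \<alpha>. c \<alpha> x * r - b \<alpha> x \<bullet> p)"
    and vs: "visc_sub G u"
    and cu: "\<And>\<alpha> x. 0 \<le> c \<alpha> x * u x"
  shows "KP l L b u"
  unfolding KP_def
proof (intro allI impI)
  fix \<phi> x0 m1 m2
  assume C: "C2 \<phi>" and lm: "\<exists>e>0. \<forall>y. dist y x0 < e \<longrightarrow> u y - \<phi> y \<le> u x0 - \<phi> x0"
    and h1: "\<forall>A\<in>ellipt_set l L. m1 \<le> - trace (A ** hhess \<phi> x0)"
    and h2: "\<forall>\<alpha>. m2 \<le> - (b \<alpha> x0 \<bullet> egrad \<phi> x0)"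
  define Y where "Y = symmetrize (hhess \<phi> x0)"
  define p where "p = egrad \<phi> x0"
  have g: "G x0 (u x0) p Y \<le> 0" using vs C lm unfolding visc_sub_def Y_def p_def by blast
  have e: "pucci_minus l L (Y - 0) \<le> G x0 (u x0) p Y - G x0 (u x0) p 0"
    using G_ell[OF _ sym0 psd0] symmetrize_sym unfolding Y_def by blast
  have "m1 \<le> pucci_minus l L Y"
    unfolding pucci_minus_def
  proof (rule cINF_greatest)
    show "ellipt_set l L \<noteq> {}" using E_mat[OF lL(2)] by blast
    fix A :: "'d hmat" assume A: "A \<in> ellipt_set l L"
    have "symmetric_mat A" using A by (simp add: ellipt_set_def)
    then show "m1 \<le> trace (- (A ** Y))"
      using h1 A by (simp add: trace_neg Y_def trace_sym)
  qed
  moreover have "m2 \<le> G x0 (u x0) p 0"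
  proof -
    have "m2 \<le> (INF \<alpha>. c \<alpha> x0 * u x0 - b \<alpha> x0 \<bullet> p)"
    proof (rule cINF_greatest)
      fix \<alpha> show "m2 \<le> c \<alpha> x0 * u x0 - b \<alpha> x0 \<bullet> p"
        using h2 cu[of \<alpha> x0] unfolding p_def by (smt (verit))
    qed simp
    then show ?thesis using G0 by (meson order_trans)
  qed
  ultimately show "m1 + m2 \<le> 0" using g e by simp
qed

lemma KP_super:
  fixes G :: "'d::finite heis \<Rightarrow> real \<Rightarrow> 'd heis \<Rightarrow> 'd hmat \<Rightarrow> real"
  assumes lL: "0 < l" "l \<le> L"
    and G_ell: "\<And>x r p M N. symmetric_mat M \<Longrightarrow> symmetric_mat N \<Longrightarrow> psd N \<Longrightarrow>
        pucci_minus l L (M - N) \<le> G x r p M - G x r p N \<and>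
        G x r p M - G x r p N \<le> pucci_plus l L (M - N)"
    and G0: "\<forall>x r p. G x r p 0 \<le> (SUP \<alpha>. c \<alpha> x * r - b \<alpha> x \<bullet> p)"
    and vs: "visc_super G v"
    and cv: "\<And>\<alpha> x. c \<alpha> x * v x \<le> 0"
  shows "KP l L b (\<lambda>x. - v x)"
  unfolding KP_def
proof (intro allI impI)
  fix \<phi> x0 m1 m2
  assume C: "C2 \<phi>" and lm: "\<exists>e>0. \<forall>y. dist y x0 < e \<longrightarrow> - v y - \<phi> y \<le> - v x0 - \<phi> x0"
    and h1: "\<forall>A\<in>ellipt_set l L. m1 \<le> - trace (A ** hhess \<phi> x0)"
    and h2: "\<forall>\<alpha>. m2 \<le> - (b \<alpha> x0 \<bullet> egrad \<phi> x0)"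
  define \<psi> where "\<psi> = (\<lambda>y. - \<phi> y)"
  have C': "C2 \<psi>" using C2_cmult[OF C, of "-1"] unfolding \<psi>_def by simp
  have lm': "\<exists>e>0. \<forall>y. dist y x0 < e \<longrightarrow> v y - \<psi> y \<ge> v x0 - \<psi> x0"
    using lm unfolding \<psi>_def by (smt (verit))
  define Y where "Y = symmetrize (hhess \<psi> x0)"
  define p where "p = egrad \<psi> x0"
  have hY: "hhess \<psi> x0 = - hhess \<phi> x0" unfolding \<psi>_def by (rule hhess_neg[OF C])
  have hp: "p = - egrad \<phi> x0" unfolding p_def \<psi>_def by (rule egrad_neg[OF C])
  have g: "G x0 (v x0) p Y \<ge> 0" using vs C' lm' unfolding visc_super_def Y_def p_def by blast
  have e: "G x0 (v x0) p Y - G x0 (v x0) p 0 \<le> pucci_plus l L (Y - 0)"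
    using G_ell[OF _ sym0 psd0] symmetrize_sym unfolding Y_def by blast
  have "pucci_plus l L Y \<le> - m1"
    unfolding pucci_plus_def
  proof (rule cSUP_least)
    show "ellipt_set l L \<noteq> {}" using E_mat[OF lL(2)] by blast
    fix A :: "'d hmat" assume A: "A \<in> ellipt_set l L"
    have "symmetric_mat A" using A by (simp add: ellipt_set_def)
    then show "trace (- (A ** Y)) \<le> - m1"
      using h1 A by (simp add: trace_neg Y_def trace_sym hY mneg) (smt (verit))
  qed
  moreover have "G x0 (v x0) p 0 \<le> - m2"
  proof -
    have "(SUP \<alpha>. c \<alpha> x0 * v x0 - b \<alpha> x0 \<bullet> p) \<le> - m2"
    proof (rule cSUP_least)
      fix \<alpha> show "c \<alpha> x0 * v x0 - b \<alpha> x0 \<bullet> p \<le> - m2"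
        using h2 cv[of \<alpha> x0] unfolding hp by (simp add: inner_minus_right) (smt (verit))
    qed simp
    then show ?thesis using G0 by (meson order_trans)
  qed
  ultimately show "m1 + m2 \<le> 0" using g e by simp
qed



lemma usc_max: assumes u: "usc u" and K: "compact K" "K \<noteq> {}" shows "\<exists>x\<in>K. \<forall>y\<in>K. u y \<le> u x"
proof (rule ccontr)
  assume "\<not> ?thesis"
  then have "\<forall>x\<in>K. \<exists>y\<in>K. u x < u y" by (auto simp: not_le)
  then obtain f where f: "\<forall>x\<in>K. f x \<in> K \<and> u x < u (f x)" by metis
  have "\<forall>x\<in>K. \<exists>d>0. \<forall>y. dist y x < d \<longrightarrow> u y < u (f x)"
  proof
    fix x assume "x \<in> K"
    then have "u (f x) - u x > 0" using f by auto
    then obtain d where "d > 0" "\<forall>y. dist y x < d \<longrightarrow> u y < u x + (u (f x) - u x)"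
      using u unfolding usc_def by blast
    then show "\<exists>d>0. \<forall>y. dist y x < d \<longrightarrow> u y < u (f x)" by auto
  qed
  then obtain d where d: "\<forall>x\<in>K. d x > 0 \<and> (\<forall>y. dist y x < d x \<longrightarrow> u y < u (f x))" by metis
  have cov: "K \<subseteq> \<Union> ((\<lambda>x. ball x (d x)) ` K)" using d by force
  obtain C where C: "C \<subseteq> K" "finite C" "K \<subseteq> \<Union> ((\<lambda>x. ball x (d x)) ` C)"
    by (rule compactE_image[OF K(1) _ cov]) auto
  have "C \<noteq> {}" using C(3) K(2) by auto
  define m where "m = Max ((\<lambda>x. u (f x)) ` C)"
  have "m \<in> (\<lambda>x. u (f x)) ` C" unfolding m_def using C(2) \<open>C \<noteq> {}\<close> by (intro Max_in) auto
  then obtain x1 where x1: "x1 \<in> C" "u (f x1) = m" by auto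
  have "f x1 \<in> K" using f x1 C by auto
  then obtain x where x: "x \<in> C" "f x1 \<in> ball x (d x)" using C(3) by auto
  then have "u (f x1) < u (f x)" using d C(1) by (auto simp: dist_commute)
  moreover have "u (f x) \<le> m" unfolding m_def using C(2) x(1) by (intro Max_ge) auto
  ultimately show False using x1 by simp
qed

lemma usc_add_cont: fixes u f :: "'a::metric_space \<Rightarrow> real" assumes u: "usc u" and f: "continuous_on UNIV f" shows "usc (\<lambda>y. u y + f y)"
  unfolding usc_def
proof (intro allI impI)
  fix x and e :: real assume e: "e > 0"
  obtain d1 where d1: "d1 > 0" "\<forall>y. dist y x < d1 \<longrightarrow> u y < u x + e/2"
    using u e unfolding usc_def by (meson half_gt_zero)
  obtain d2 where d2: "d2 > 0" "\<forall>y. dist y x < d2 \<longrightarrow> dist (f y) (f x) < e/2"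
    using f e unfolding continuous_on_iff by (meson UNIV_I half_gt_zero)
  show "\<exists>\<delta>>0. \<forall>y. dist y x < \<delta> \<longrightarrow> u y + f y < u x + f x + e"
  proof (intro exI[of _ "min d1 d2"] conjI allI impI)
    fix y assume "dist y x < min d1 d2"
    then have "u y < u x + e/2" "dist (f y) (f x) < e/2" using d1 d2 by auto
    then have "u y < u x + e/2" "f y - f x < e/2" by (metis abs_less_iff dist_real_def)+
    then show "u y + f y < u x + f x + e" by linarith
  qed (use d1 d2 in auto)
qed

lemma usc_closed: assumes "usc u" shows "closed {x. c \<le> u x}"
proof -
  have "open {x. u x < c}"
    unfolding open_dist
  proof (intro ballI)
    fix x assume "x \<in> {x. u x < c}"
    then obtain d where "d > 0" "\<forall>y. dist y x < d \<longrightarrow> u y < u x + (c - u x)"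
      using assms unfolding usc_def by (metis diff_gt_0_iff_gt mem_Collect_eq)
    then show "\<exists>e>0. \<forall>y. dist y x < e \<longrightarrow> y \<in> {x. u x < c}" by auto
  qed
  then show ?thesis by (simp add: closed_def Compl_eq not_le[symmetric])
qed

lemma trace_comb: "trace ((A::real^'n^'n) ** (\<chi> i j. a * S$i$j + c * (g$i * g$j))) = a * trace (A ** S) + c * (g \<bullet> (A *v g))"
  by (simp add: trace_mm quad_form sum_distrib_left sum.distrib[symmetric] algebra_simps)



lemma hlin_cont[continuous_intros]: "continuous_on S f \<Longrightarrow> continuous_on S (\<lambda>x. hlin k (f x))"
  using bounded_linear.continuous_on[OF hlin_linear] by blast

lemma hfield_cont2[continuous_intros]: "continuous_on S f \<Longrightarrow> continuous_on S (\<lambda>x. hfield k (f x))"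
  by (rule continuous_on_compose2[OF hfield_cont]) auto

lemma hball_facts:
  fixes p :: "'d::finite heis" and R :: real
  assumes h_def: "h = (\<lambda>y. R^2 - (y - p) \<bullet> (y - p))"
  shows hball_deriv: "\<And>y. (h has_derivative (\<lambda>v. -2 * ((y - p) \<bullet> v))) (at y)"
    and hball_C2: "C2 h"
    and hball_X: "\<And>j. Xop j h = (\<lambda>y. -2 * ((y - p) \<bullet> hfield j y))"
    and hball_Xd: "\<And>j x. ((\<lambda>y. -2 * ((y - p) \<bullet> hfield j y)) has_derivative
          (\<lambda>v. -2 * (v \<bullet> hfield j x + (x - p) \<bullet> hlin j v))) (at x)"
    and hball_HH: "\<And>x i j. hhess h x $ i $ j = -2 * (hfield i x \<bullet> hfield j x + (x - p) \<bullet> hlin j (hfield i x))"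
    and hball_eg: "\<And>y. egrad h y = -2 *\<^sub>R (y - p)"
proof -
  show d: "(h has_derivative (\<lambda>v. -2 * ((y - p) \<bullet> v))) (at y)" for y
    unfolding h_def by (auto intro!: derivative_eq_intros simp: inner_commute)
  have "h = (\<lambda>y. R^2 - norm ((\<lambda>y. y) y - p) ^ 2)" unfolding h_def by (simp add: power2_norm_eq_inner)
  then show "C2 h" using C2_diff[OF C2_const C2_norm2[OF bounded_linear_ident]] by simp
  show X: "Xop j h = (\<lambda>y. -2 * ((y - p) \<bullet> hfield j y))" for j
    by (rule Xop_fun[OF d])
  show Xd: "((\<lambda>y. -2 * ((y - p) \<bullet> hfield j y)) has_derivative
          (\<lambda>v. -2 * (v \<bullet> hfield j x + (x - p) \<bullet> hlin j v))) (at x)" for j x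
    by (auto intro!: derivative_eq_intros hfield_deriv simp: algebra_simps)
  show "hhess h x $ i $ j = -2 * (hfield i x \<bullet> hfield j x + (x - p) \<bullet> hlin j (hfield i x))" for x i j
    unfolding hhess_def X using Xop_eq[OF Xd] by simp
  show "egrad h y = -2 *\<^sub>R (y - p)" for y
    by (rule egrad_eq[OF d]) (simp add: inner_commute)
qed


lemma cont_bound: assumes "continuous_on UNIV f" "compact S" shows "\<exists>B. \<forall>y\<in>S. norm (f y) \<le> B"
  using compact_imp_bounded[OF compact_continuous_image[OF continuous_on_subset[OF assms(1)] assms(2)]]
  unfolding bounded_iff by auto

declare split_paired_All[simp del] split_paired_Ex[simp del]

lemma hopf:
  fixes u :: "'d::finite heis \<Rightarrow> real" and b :: "'a \<Rightarrow> 'd heis \<Rightarrow> 'd heis"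
  assumes lL: "0 < l" "l \<le> L" and kp: "KP l L b u" and uu: "usc u" and le: "\<forall>x. u x \<le> M"
    and uz: "u z = M" and R: "R > 0" and dz: "dist z p = R"
    and ins: "\<forall>x. dist x p \<le> R \<longrightarrow> x \<noteq> z \<longrightarrow> u x < M"
    and bb: "\<forall>r. \<exists>B. \<forall>\<alpha> y. norm y \<le> r \<longrightarrow> norm (b \<alpha> y) \<le> B"
  shows "(z - p) \<bullet> hfield j0 z = 0"
proof (rule ccontr)
  assume nz: "(z - p) \<bullet> hfield j0 z \<noteq> 0"
  define h where "h = (\<lambda>y::'d heis. R^2 - (y - p) \<bullet> (y - p))"
  note hf = hball_facts[OF h_def]
  have hz: "h z = 0" using dz unfolding h_def by (simp add: dist_norm power2_norm_eq_inner[symmetric])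
  define ng where "ng = (\<lambda>y. \<Sum>j\<in>UNIV. (-2 * ((y - p) \<bullet> hfield j y))^2)"
  define \<delta> where "\<delta> = ng z"
  have "(-2 * ((z - p) \<bullet> hfield j0 z))^2 \<le> ng z"
    unfolding ng_def by (rule member_le_sum) auto
  moreover have "(-2 * ((z - p) \<bullet> hfield j0 z))^2 > 0" using nz by simp
  ultimately have dpos: "\<delta> > 0" unfolding \<delta>_def by linarith
  have cng: "continuous_on UNIV ng" unfolding ng_def by (intro continuous_intros)
  obtain r1 where r1: "r1 > 0" "\<forall>y. dist y z < r1 \<longrightarrow> dist (ng y) (ng z) < \<delta>/2"
    using cng dpos unfolding continuous_on_iff by (meson UNIV_I half_gt_zero)
  define r0 where "r0 = min (r1/2) 1"
  have r0: "r0 > 0" unfolding r0_def using r1 by simp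
  have ngb: "ng y \<ge> \<delta>/2" if "dist y z \<le> r0" for y
  proof -
    have "dist y z < r1" using that r1 unfolding r0_def by simp
    then have "\<bar>ng y - ng z\<bar> < \<delta>/2" using r1 unfolding \<delta>_def dist_real_def by blast
    then have "- (\<delta>/2) < ng y - ng z" by (simp only: abs_less_iff) linarith
    then show ?thesis unfolding \<delta>_def by linarith
  qed
  define Ss where "Ss = (\<lambda>y. \<Sum>i\<in>UNIV. \<Sum>k\<in>UNIV. \<bar>hhess h y $ i $ k\<bar>)"
  have cSs: "continuous_on UNIV Ss" unfolding Ss_def hf(5) by (intro continuous_intros)
  obtain CS where CS: "\<forall>y\<in>cball z r0. norm (Ss y) \<le> CS" using cont_bound[OF cSs compact_cball] by blast
  have CS0: "CS \<ge> 0" using CS r0 by (meson centre_in_cball less_imp_le norm_ge_zero order_trans)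
  obtain B where B: "\<forall>\<alpha> y. norm y \<le> norm z + r0 \<longrightarrow> norm (b \<alpha> y) \<le> B" using bb by blast
  have B0: "B \<ge> 0" using B by (meson norm_ge_zero order_trans le_add_same_cancel1 less_imp_le r0)
  define CD where "CD = 2 * (r0 + R)"
  have CD0: "CD \<ge> 0" using r0 R unfolding CD_def by simp
  have egb: "norm (egrad h y) \<le> CD" if "dist y z \<le> r0" for y
  proof -
    have "norm (y - p) \<le> dist y z + dist z p" by (metis dist_norm dist_triangle)
    then show ?thesis using that dz unfolding hf(6) CD_def by simp
  qed
  define k where "k = (2*L*CS + 2*B*CD + 1) / (l * \<delta>)"
  have kpos: "k > 0" unfolding k_def using lL dpos CS0 B0 CD0 by (intro divide_pos_pos) (auto intro!: add_nonneg_pos)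
  have kid: "k * l * \<delta> = 2*L*CS + 2*B*CD + 1" unfolding k_def using lL dpos by simp
  have ch: "continuous_on UNIV h" using hf(1)
    by (meson continuous_at_imp_continuous_on has_derivative_continuous)
  obtain r2 where r2: "r2 > 0" "\<forall>y. dist y z < r2 \<longrightarrow> dist (h y) (h z) < 1/(2*k)"
    using ch kpos unfolding continuous_on_iff by (metis UNIV_I divide_pos_pos mult_pos_pos zero_less_numeral zero_less_one)
  define r where "r = min r0 (r2/2)"
  have rpos: "r > 0" unfolding r_def using r0 r2 by simp
  have hsmall: "\<bar>h y\<bar> \<le> 1/(2*k)" if "dist y z \<le> r" for y
  proof -
    have "dist y z < r2" using that r2 unfolding r_def by simp
    then have "\<bar>h y - h z\<bar> < 1/(2*k)" using r2 unfolding dist_real_def by blast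
    then show ?thesis using hz by simp
  qed
  define K where "K = sphere z r \<inter> cball p R"
  have Kc: "compact K" unfolding K_def by (intro compact_Int_closed compact_sphere closed_cball)
  obtain \<eta> where eta: "\<eta> > 0" "\<forall>y\<in>K. u y \<le> M - \<eta>"
  proof (cases "K = {}")
    case True then show ?thesis using that[of 1] by simp
  next
    case False
    then obtain y0 where y0: "y0 \<in> K" "\<forall>y\<in>K. u y \<le> u y0" using usc_max[OF uu Kc] by blast
    have "y0 \<noteq> z" using y0 rpos unfolding K_def by auto
    then have "u y0 < M" using ins y0 unfolding K_def by (auto simp: dist_commute)
    then show ?thesis using that[of "M - u y0"] y0 by simp
  qed
  define \<epsilon> where "\<epsilon> = \<eta> * k / 2"
  have epos: "\<epsilon> > 0" unfolding \<epsilon>_def using eta kpos by simp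
  define F where "F = (\<lambda>s::real. - \<epsilon> * (s + k * s^2))"
  define F1 where "F1 = (\<lambda>s::real. - \<epsilon> * (1 + 2 * k * s))"
  define F2 where "F2 = (\<lambda>s::real. - \<epsilon> * (2 * k))"
  have dF1: "(F has_real_derivative F1 t) (at t)" for t
    unfolding F_def F1_def by (auto intro!: derivative_eq_intros simp: algebra_simps)
  have dF2: "(F1 has_real_derivative F2 t) (at t)" for t
    unfolding F2_def F1_def by (auto intro!: derivative_eq_intros simp: algebra_simps)
  define \<phi> where "\<phi> = (\<lambda>y. F (h y))"
  have C\<phi>: "C2 \<phi>" unfolding \<phi>_def
    by (rule C2_comp[OF hf(2) open_UNIV, of F F1 F2]) (use dF1 dF2 in \<open>auto simp: F2_def\<close>)
  have c\<phi>: "continuous_on UNIV (\<lambda>y. - \<phi> y)" unfolding \<phi>_def F_def using ch by (intro continuous_intros)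
  have u\<psi>: "usc (\<lambda>y. u y + - \<phi> y)" by (rule usc_add_cont[OF uu c\<phi>])
  obtain x0 where x0: "x0 \<in> cball z r" "\<forall>y\<in>cball z r. u y + - \<phi> y \<le> u x0 + - \<phi> x0"
    using usc_max[OF u\<psi> compact_cball] rpos by (metis centre_in_cball less_imp_le empty_iff)
  have "u z + - \<phi> z = M" unfolding \<phi>_def F_def using uz hz by simp
  then have big: "u x0 - \<phi> x0 \<ge> M" using x0 rpos by (metis centre_in_cball less_imp_le diff_conv_add_uminus)
  have dx0: "dist x0 z \<le> r" using x0 by (simp add: dist_commute)
  have hx0: "\<bar>h x0\<bar> \<le> 1/(2*k)" using hsmall[OF dx0] .
  have khx: "\<bar>k * h x0\<bar> \<le> 1/2" using hx0 kpos by (simp add: abs_mult field_simps)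
  have inter: "dist x0 z < r"
  proof (rule ccontr)
    assume "\<not> dist x0 z < r"
    then have dr: "dist x0 z = r" using dx0 by simp
    show False
    proof (cases "dist x0 p \<le> R")
      case True
      then have "x0 \<in> K" unfolding K_def using dr by (simp add: dist_commute)
      then have "u x0 \<le> M - \<eta>" using eta by blast
      moreover have "- \<phi> x0 < \<eta>"
      proof -
        have s1: "h x0 \<le> 1/(2*k)" using hx0 by (simp add: abs_le_iff)
        have "\<bar>h x0\<bar>^2 \<le> (1/(2*k))^2" by (rule power_mono[OF hx0]) simp
        then have s2: "(h x0)^2 \<le> (1/(2*k))^2" by simp
        have "h x0 + k * (h x0)^2 \<le> 1/(2*k) + k * (1/(2*k))^2"
          using s1 s2 kpos by (intro add_mono mult_left_mono) auto
        also have "\<dots> = 3 / (4 * k)" using kpos by (simp add: field_simps power2_eq_square)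
        finally have "\<epsilon> * (h x0 + k * (h x0)^2) \<le> \<epsilon> * (3 / (4*k))" by (meson epos less_imp_le mult_left_mono)
        also have "\<dots> < \<eta>" unfolding \<epsilon>_def using kpos eta by (simp add: field_simps)
        finally show ?thesis unfolding \<phi>_def F_def by simp
      qed
      ultimately show False using big by simp
    next
      case False
      then have "(x0 - p) \<bullet> (x0 - p) > R^2" using R
        by (simp add: dist_norm power2_norm_eq_inner[symmetric] power_strict_mono)
      then have hneg: "h x0 < 0" unfolding h_def by simp
      have "h x0 + k * (h x0)^2 = h x0 * (1 + k * h x0)" by (simp add: power2_eq_square algebra_simps)
      moreover have "1 + k * h x0 > 0" using khx by (simp add: abs_le_iff)
      ultimately have "h x0 + k * (h x0)^2 < 0" using hneg by (simp add: mult_neg_pos)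
      then have "- \<phi> x0 < 0" unfolding \<phi>_def F_def using epos by (simp add: mult_pos_neg)
      then show False using big le by (smt (verit))
    qed
  qed
  have lm: "\<exists>e>0. \<forall>y. dist y x0 < e \<longrightarrow> u y - \<phi> y \<le> u x0 - \<phi> x0"
  proof (intro exI[of _ "r - dist x0 z"] conjI allI impI)
    show "r - dist x0 z > 0" using inter by simp
    fix y assume "dist y x0 < r - dist x0 z"
    then have "dist y z < r" by (smt (verit) dist_triangle)
    then have "y \<in> cball z r" by (simp add: dist_commute)
    then show "u y - \<phi> y \<le> u x0 - \<phi> x0" using x0 by auto
  qed
  define gv where "gv = (\<chi> i. Xop i h x0)"
  define S where "S = hhess h x0"
  have Xdiff: "Xop j h differentiable (at x0)" for j using C2_Xop_differentiable[OF hf(2)] .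
  have hdiff: "h differentiable (at y)" for y using C2_differentiable[OF hf(2)] .
  have HH: "hhess \<phi> x0 = (\<chi> i j. F1 (h x0) * S $ i $ j + F2 (h x0) * (gv $ i * gv $ j))"
    unfolding \<phi>_def S_def gv_def
    by (subst hhess_comp[OF hdiff Xdiff, of UNIV F F1 F2]) (use dF1 dF2 in auto)
  have ngx: "norm gv ^ 2 = ng x0"
    unfolding gv_def ng_def hf(3) by (simp only: power2_norm_eq_inner) (simp add: inner_vec_def power2_eq_square)
  have dx0r0: "dist x0 z \<le> r0" using dx0 unfolding r_def by simp
  have F1b: "0 \<le> - F1 (h x0) / \<epsilon>" "- F1 (h x0) / \<epsilon> \<le> 2"
    unfolding F1_def using khx epos by (auto simp: abs_le_iff)
  define m1 where "m1 = \<epsilon> * (k * l * \<delta> - 2 * L * CS)"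
  define m2 where "m2 = - (2 * \<epsilon> * B * CD)"
  have h1: "\<forall>A\<in>ellipt_set l L. m1 \<le> - trace (A ** hhess \<phi> x0)"
  proof
    fix A :: "'d hmat" assume A: "A \<in> ellipt_set l L"
    have tr: "- trace (A ** hhess \<phi> x0) = (- F1 (h x0)) * trace (A ** S) + (2 * \<epsilon> * k) * (gv \<bullet> (A *v gv))"
      unfolding HH trace_comb F2_def by simp
    have q: "gv \<bullet> (A *v gv) \<ge> l * (\<delta>/2)"
    proof -
      have "l * (\<delta>/2) \<le> l * norm gv ^ 2" unfolding ngx using ngb[OF dx0r0] lL by (intro mult_left_mono) auto
      then show ?thesis using E_lower[OF A, of gv] by linarith
    qed
    have t: "\<bar>trace (A ** S)\<bar> \<le> L * CS"
    proof -
      have "\<bar>trace (A ** S)\<bar> \<le> L * Ss x0" unfolding Ss_def S_def using E_trace_bound[OF A] lL by simp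
      also have "\<dots> \<le> L * CS"
      proof (rule mult_left_mono)
        have "x0 \<in> cball z r0" using dx0r0 by (simp add: dist_commute)
        then have "\<bar>Ss x0\<bar> \<le> CS" using CS by auto
        then show "Ss x0 \<le> CS" by simp
      qed (use lL in auto)
      finally show ?thesis .
    qed
    have a: "(- F1 (h x0)) * trace (A ** S) \<ge> - (2 * \<epsilon>) * (L * CS)"
    proof -
      define c where "c = 1 + 2 * k * h x0"
      define t where "t = trace (A ** S)"
      have c02: "0 \<le> c" "c \<le> 2" unfolding c_def using khx by (auto simp: abs_le_iff)
      have "c * \<bar>t\<bar> \<le> 2 * (L * CS)" using c02 t unfolding t_def by (intro mult_mono) auto
      moreover have "\<bar>c * t\<bar> = c * \<bar>t\<bar>" using c02 by (simp add: abs_mult)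
      moreover have "- \<bar>c * t\<bar> \<le> c * t" by (cases "c * t \<ge> 0") auto
      ultimately have "- (2 * (L * CS)) \<le> c * t" by linarith
      then have "\<epsilon> * (- (2 * (L * CS))) \<le> \<epsilon> * (c * t)" using epos by (intro mult_left_mono) auto
      moreover have "- F1 (h x0) * trace (A ** S) = \<epsilon> * (c * t)" unfolding F1_def c_def t_def by simp
      ultimately show ?thesis by simp
    qed
    have "(2 * \<epsilon> * k) * (gv \<bullet> (A *v gv)) \<ge> (2 * \<epsilon> * k) * (l * (\<delta>/2))"
      using q epos kpos by (intro mult_left_mono) auto
    then show "m1 \<le> - trace (A ** hhess \<phi> x0)" unfolding tr m1_def using a
      by (simp add: algebra_simps)
  qed
  have h2: "\<forall>\<alpha>. m2 \<le> - (b \<alpha> x0 \<bullet> egrad \<phi> x0)"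
  proof
    fix \<alpha>
    have eg: "egrad \<phi> x0 = F1 (h x0) *\<^sub>R egrad h x0"
    proof (rule egrad_eq)
      show "(\<phi> has_derivative (\<lambda>v. (-2 * ((x0 - p) \<bullet> v)) * F1 (h x0))) (at x0)"
        unfolding \<phi>_def by (rule DERIV_compose_FDERIV[OF dF1 hf(1)])
      show "-2 * ((x0 - p) \<bullet> v) * F1 (h x0) = (F1 (h x0) *\<^sub>R egrad h x0) \<bullet> v" for v
        unfolding hf(6) by simp
    qed
    have nb: "norm (b \<alpha> x0) \<le> B"
    proof -
      have "norm x0 \<le> norm z + r0" using dx0r0 by (metis add_le_cancel_left dist_norm norm_triangle_sub order_trans)
      then show ?thesis using B by blast
    qed
    have ne: "norm (egrad \<phi> x0) \<le> 2 * \<epsilon> * CD"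
    proof -
      have "\<bar>F1 (h x0)\<bar> \<le> 2 * \<epsilon>" using F1b epos by (simp add: abs_le_iff field_simps)
      then have "norm (egrad \<phi> x0) \<le> (2 * \<epsilon>) * CD" unfolding eg
        using egb[OF dx0r0] by (simp add: mult_mono)
      then show ?thesis by simp
    qed
    have "\<bar>b \<alpha> x0 \<bullet> egrad \<phi> x0\<bar> \<le> B * (2 * \<epsilon> * CD)"
    proof -
      have "norm (b \<alpha> x0) * norm (egrad \<phi> x0) \<le> B * (2 * \<epsilon> * CD)"
        using nb ne B0 by (intro mult_mono) auto
      then show ?thesis using Cauchy_Schwarz_ineq2[of "b \<alpha> x0" "egrad \<phi> x0"] by linarith
    qed
    then show "m2 \<le> - (b \<alpha> x0 \<bullet> egrad \<phi> x0)" unfolding m2_def by (simp add: abs_le_iff algebra_simps)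
  qed
  have "m1 + m2 \<le> 0" using kp C\<phi> lm h1 h2 unfolding KP_def by blast
  moreover have "m1 + m2 = \<epsilon>" unfolding m1_def m2_def using kid by (simp add: algebra_simps)
  ultimately show False using epos by simp
qed



declare split_paired_All[simp del] split_paired_Ex[simp del]

lemma norm_fst_le: "norm (fst x) \<le> norm x"
  by (simp add: norm_prod_def real_sqrt_sum_squares_ge1)
lemma norm_snd_le: "norm (snd x) \<le> norm x"
  by (simp add: norm_prod_def real_sqrt_sum_squares_ge2)

lemma heis_parts: fixes x :: "'d::finite heis"
  shows "norm (fst x) \<le> norm x" "norm (fst (snd x)) \<le> norm x" "\<bar>snd (snd x)\<bar> \<le> norm x"
  using norm_fst_le[of x] norm_snd_le[of x] norm_fst_le[of "snd x"] norm_snd_le[of "snd x"] by auto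

definition Yv :: "real^'d::finite \<Rightarrow> real^'d \<Rightarrow> 'd heis \<Rightarrow> 'd heis" where
  "Yv va vb x = (va, vb, 2 * (fst (snd x) \<bullet> va - fst x \<bullet> vb))"

lemma Yv_const: "Yv va vb (x + s *\<^sub>R Yv va vb x) = Yv va vb x"
  by (simp add: Yv_def inner_add_left inner_commute algebra_simps)

lemma Yv_inner: "\<nu> \<bullet> Yv va vb z = (\<Sum>k\<in>UNIV. va$k * (\<nu> \<bullet> hfield (Inl k) z) + vb$k * (\<nu> \<bullet> hfield (Inr k) z))"
proof -
  obtain a b t where z: "z = (a, b, t)" by (metis prod.collapse)
  obtain na nb nt where n: "\<nu> = (na, nb, nt)" by (metis prod.collapse)
  show ?thesis unfolding z n Yv_def
    by (simp add: inner_prod_def inner_axis) (simp add: inner_vec_def sum.distrib sum_distrib_left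
        sum_subtractf algebra_simps)
qed

lemma Yv_diff: "(y - z) \<bullet> (Yv va vb y - Yv va vb z) \<le> 2 * (norm va + norm vb) * norm (y - z) ^ 2"
proof -
  define \<nu> where "\<nu> = y - z"
  have e: "(y - z) \<bullet> (Yv va vb y - Yv va vb z) = snd (snd \<nu>) * (2 * (fst (snd \<nu>) \<bullet> va - fst \<nu> \<bullet> vb))"
    unfolding \<nu>_def Yv_def by (simp add: inner_prod_def inner_diff_left algebra_simps)
  have p: "norm (fst \<nu>) \<le> norm \<nu>" "norm (fst (snd \<nu>)) \<le> norm \<nu>" "\<bar>snd (snd \<nu>)\<bar> \<le> norm \<nu>"
    using heis_parts[of \<nu>] by auto
  have "\<bar>fst (snd \<nu>) \<bullet> va - fst \<nu> \<bullet> vb\<bar> \<le> norm \<nu> * norm va + norm \<nu> * norm vb"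
  proof -
    have "\<bar>fst (snd \<nu>) \<bullet> va\<bar> \<le> norm \<nu> * norm va"
      using Cauchy_Schwarz_ineq2[of "fst (snd \<nu>)" va] p(2) by (meson mult_right_mono norm_ge_zero order_trans)
    moreover have "\<bar>fst \<nu> \<bullet> vb\<bar> \<le> norm \<nu> * norm vb"
      using Cauchy_Schwarz_ineq2[of "fst \<nu>" vb] p(1) by (meson mult_right_mono norm_ge_zero order_trans)
    ultimately show ?thesis by linarith
  qed
  then have "\<bar>snd (snd \<nu>)\<bar> * \<bar>fst (snd \<nu>) \<bullet> va - fst \<nu> \<bullet> vb\<bar> \<le> norm \<nu> * (norm \<nu> * norm va + norm \<nu> * norm vb)"
    using p(3) by (intro mult_mono) auto
  moreover have "\<bar>(y - z) \<bullet> (Yv va vb y - Yv va vb z)\<bar> = 2 * (\<bar>snd (snd \<nu>)\<bar> * \<bar>fst (snd \<nu>) \<bullet> va - fst \<nu> \<bullet> vb\<bar>)"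
    unfolding e by (simp only: abs_mult abs_numeral mult.left_commute)
  ultimately have "\<bar>(y - z) \<bullet> (Yv va vb y - Yv va vb z)\<bar> \<le> 2 * (norm \<nu> * (norm \<nu> * norm va + norm \<nu> * norm vb))"
    by linarith
  then show ?thesis unfolding \<nu>_def by (simp add: power2_eq_square algebra_simps)
qed



declare split_paired_All[simp del] split_paired_Ex[simp del]

lemma parallelogram: "norm (a + w) ^ 2 + norm (a - w) ^ 2 = 2 * norm a ^ 2 + 2 * norm (w::'a::real_inner) ^ 2"
  by (simp add: power2_norm_eq_inner inner_add_left inner_add_right inner_diff_left inner_diff_right inner_commute)

lemma pow_exp_bound: assumes "C \<ge> 0" "n > 0" shows "(1 + C / real n) ^ n \<le> exp C"
proof -
  have "(1 + C / real n) ^ n \<le> exp (C / real n) ^ n"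
    using assms by (intro power_mono) (auto simp: exp_ge_add_one_self)
  also have "\<dots> = exp C" using assms by (simp add: exp_of_nat_mult[symmetric])
  finally show ?thesis .
qed

lemma smp:
  fixes u :: "'d::finite heis \<Rightarrow> real" and b :: "'a \<Rightarrow> 'd heis \<Rightarrow> 'd heis"
  assumes lL: "0 < l" "l \<le> L" and kp: "KP l L b u" and uu: "usc u" and le: "\<forall>x. u x \<le> M"
    and xs: "u xs = M"
    and bb: "\<forall>r. \<exists>B. \<forall>\<alpha> y. norm y \<le> r \<longrightarrow> norm (b \<alpha> y) \<le> B"
  shows "u x = M"
proof -
  define Fs where "Fs = {x. M \<le> u x}"
  have Fc: "closed Fs" unfolding Fs_def by (rule usc_closed[OF uu])
  have Fne: "Fs \<noteq> {}" using xs unfolding Fs_def by auto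
  have nrm: "(q - z) \<bullet> hfield j z = 0"
    if z: "z \<in> Fs" and d: "d > 0" "dist q z = d" and away: "\<forall>y. dist y q < d \<longrightarrow> y \<notin> Fs" for q z d j
  proof -
    define p where "p = (1/2) *\<^sub>R (q + z)"
    have zp: "z - p = (1/2) *\<^sub>R (z - q)" unfolding p_def by (simp add: algebra_simps) (simp add: scaleR_add_left[symmetric])
    have "dist z p = d/2" using d unfolding dist_norm zp by (simp add: dist_norm norm_minus_commute)
    moreover have "u z = M" using z le unfolding Fs_def by (simp add: order_antisym)
    moreover have "\<forall>x. dist x p \<le> d/2 \<longrightarrow> x \<noteq> z \<longrightarrow> u x < M"
    proof (intro allI impI)
      fix x assume x: "dist x p \<le> d/2" "x \<noteq> z"
      define a where "a = x - p"
      define w where "w = z - p"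
      have pp: "p + p = q + z" unfolding p_def by (simp only: scaleR_add_left[symmetric]) simp
      have "a + w = x + z - (p + p)" unfolding a_def w_def by (simp add: algebra_simps)
      then have "x - q = a + w" unfolding pp by simp
      moreover have "x - z = a - w" unfolding a_def w_def by simp
      moreover have na: "norm a \<le> d/2" using x unfolding a_def by (simp add: dist_norm)
      moreover have nw: "norm w = d/2" using \<open>dist z p = d/2\<close> unfolding w_def by (simp add: dist_norm)
      ultimately have "norm (x - q) ^ 2 < d ^ 2"
      proof -
        have "norm (a - w) ^ 2 > 0" using x(2) \<open>x - z = a - w\<close> by auto
        moreover have "norm a ^ 2 \<le> (d/2)^2" using na by (simp add: power_mono)
        ultimately have "norm (a + w) ^ 2 < d ^ 2" using parallelogram[of a w] nw by (simp add: power2_eq_square) 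
        then show ?thesis using \<open>x - q = a + w\<close> by simp
      qed
      then have "dist x q < d" using d by (simp add: dist_norm power_less_imp_less_base)
      then have "x \<notin> Fs" using away by blast
      then show "u x < M" unfolding Fs_def by simp
    qed
    ultimately have "(z - p) \<bullet> hfield j z = 0"
      using hopf[OF lL kp uu le _ _ _ _ bb, of z "d/2" p j] d by simp
    then show ?thesis unfolding zp by (simp add: inner_commute inner_diff_left inner_diff_right)
  qed
  have step: "infdist (y + h *\<^sub>R Yv va vb y) Fs ^ 2
      \<le> infdist y Fs ^ 2 * (1 + 4 * (norm va + norm vb) * h) + h^2 * norm (Yv va vb y) ^ 2"
    if h: "h \<ge> 0" for y h va vb
  proof -
    obtain z where z: "z \<in> Fs" "infdist y Fs = dist y z" using infdist_attains_inf[OF Fc Fne] by blast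
    define d where "d = dist y z"
    have orth: "(y - z) \<bullet> Yv va vb z = 0"
    proof (cases "d = 0")
      case True then show ?thesis unfolding d_def by simp
    next
      case False
      then have dpos: "d > 0" unfolding d_def by simp
      have "\<forall>w. dist w y < d \<longrightarrow> w \<notin> Fs"
      proof (intro allI impI notI)
        fix w assume w: "dist w y < d" "w \<in> Fs"
        then have "infdist y Fs \<le> dist y w" by (intro infdist_le) 
        then show False using z(2) w(1) unfolding d_def by (simp add: dist_commute)
      qed
      then have "(y - z) \<bullet> hfield j z = 0" for j using nrm[OF z(1) dpos, of y] unfolding d_def by blast
      then show ?thesis by (simp add: Yv_inner)
    qed
    have "(y - z) \<bullet> Yv va vb y = (y - z) \<bullet> (Yv va vb y - Yv va vb z)" using orth by (simp add: inner_diff_right)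
    also have "\<dots> \<le> 2 * (norm va + norm vb) * d ^ 2" unfolding d_def dist_norm by (rule Yv_diff)
    finally have ip: "(y - z) \<bullet> Yv va vb y \<le> 2 * (norm va + norm vb) * d ^ 2" .
    have "infdist (y + h *\<^sub>R Yv va vb y) Fs \<le> dist (y + h *\<^sub>R Yv va vb y) z" by (rule infdist_le[OF z(1)])
    then have "infdist (y + h *\<^sub>R Yv va vb y) Fs ^ 2 \<le> norm ((y - z) + h *\<^sub>R Yv va vb y) ^ 2"
      by (intro power_mono) (auto simp: dist_norm algebra_simps infdist_nonneg)
    also have "\<dots> = d^2 + 2 * h * ((y - z) \<bullet> Yv va vb y) + h^2 * norm (Yv va vb y) ^ 2"
      unfolding d_def dist_norm power2_norm_eq_inner
      by (simp add: inner_add_left inner_add_right inner_commute power2_eq_square algebra_simps)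
    also have "\<dots> \<le> d^2 + 2 * h * (2 * (norm va + norm vb) * d ^ 2) + h^2 * norm (Yv va vb y) ^ 2"
      using ip h by (intro add_mono mult_left_mono) auto
    finally show ?thesis using z(2) unfolding d_def by (simp add: algebra_simps)
  qed
  have inv: "x + Yv va vb x \<in> Fs" if x: "x \<in> Fs" for x va vb
  proof -
    define Y0 where "Y0 = Yv va vb x"
    define C where "C = 4 * (norm va + norm vb)"
    define C' where "C' = norm Y0 ^ 2"
    have C0: "C \<ge> 0" "C' \<ge> 0" unfolding C_def C'_def by auto
    define g where "g = infdist (x + Y0) Fs ^ 2"
    have gb: "g \<le> C' * exp C / real n" if n: "n > 0" for n :: nat
    proof -
      define hh where "hh = 1 / real n"
      have hh0: "hh \<ge> 0" unfolding hh_def by simp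
      have it: "infdist (x + (real k * hh) *\<^sub>R Y0) Fs ^ 2 \<le> C' * hh^2 * real k * (1 + C * hh) ^ k" for k
      proof (induction k)
        case 0 then show ?case using x by (simp add: infdist_zero)
      next
        case (Suc k)
        define y where "y = x + (real k * hh) *\<^sub>R Y0"
        have Yy: "Yv va vb y = Y0" unfolding y_def Y0_def by (rule Yv_const)
        have "y + hh *\<^sub>R Yv va vb y = y + hh *\<^sub>R Y0" by (simp only: Yy)
        also have "\<dots> = x + (real (Suc k) * hh) *\<^sub>R Y0" unfolding y_def by (simp add: algebra_simps)
        finally have ys: "x + (real (Suc k) * hh) *\<^sub>R Y0 = y + hh *\<^sub>R Yv va vb y" by simp
        have p1: "(1 + C * hh) ^ k \<le> (1 + C * hh) ^ Suc k" using C0 hh0 by (intro power_increasing) auto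
        have p2: "1 \<le> (1 + C * hh) ^ Suc k" using C0 hh0 by (intro one_le_power) auto
        have "infdist (x + (real (Suc k) * hh) *\<^sub>R Y0) Fs ^ 2
           \<le> infdist y Fs ^ 2 * (1 + C * hh) + hh^2 * C'"
          unfolding ys using step[OF hh0, of y va vb] unfolding Yy C_def C'_def by (simp add: mult.assoc)
        also have "\<dots> \<le> (C' * hh^2 * real k * (1 + C * hh) ^ k) * (1 + C * hh) + hh^2 * C'"
          using Suc.IH C0 hh0 unfolding y_def by (intro add_mono mult_right_mono) auto
        also have "\<dots> = C' * hh^2 * (real k * (1 + C * hh) ^ Suc k + 1)" by (simp add: algebra_simps)
        also have "\<dots> \<le> C' * hh^2 * (real k * (1 + C * hh) ^ Suc k + (1 + C * hh) ^ Suc k)"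
          using p2 C0 by (intro mult_left_mono add_left_mono) auto
        also have "\<dots> = C' * hh^2 * real (Suc k) * (1 + C * hh) ^ Suc k" by (simp add: algebra_simps)
        finally show ?case .
      qed
      have "x + (real n * hh) *\<^sub>R Y0 = x + Y0" unfolding hh_def using n by simp
      then have "g \<le> C' * hh^2 * real n * (1 + C * hh) ^ n" using it[of n] unfolding g_def by simp
      also have "\<dots> = (C' / real n) * (1 + C / real n) ^ n" unfolding hh_def using n by (simp add: power2_eq_square field_simps)
      also have "\<dots> \<le> (C' / real n) * exp C" using pow_exp_bound[OF C0(1) n] C0 by (intro mult_left_mono) auto
      finally show ?thesis by simp
    qed
    have "g \<le> 0"
    proof (rule ccontr)
      assume "\<not> g \<le> 0"
      then have gp: "g > 0" by simp
      obtain n :: nat where n: "n > C' * exp C / g" using reals_Archimedean2 by blast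
      have npos: "n > 0" using n C0 gp by (metis divide_nonneg_pos exp_gt_zero less_eq_real_def mult_nonneg_nonneg not_less of_nat_0_less_iff order.strict_trans2)
      have "C' * exp C < n * g" using n gp by (simp add: field_simps)
      moreover have "g * n \<le> C' * exp C" using gb[OF npos] npos by (simp add: field_simps)
      ultimately show False by (simp add: mult.commute)
    qed
    then have "infdist (x + Y0) Fs = 0" unfolding g_def using infdist_nonneg[of "x + Y0" Fs] by simp
    then show ?thesis using in_closed_iff_infdist_zero[OF Fc Fne] unfolding Y0_def by blast
  qed
  have xsF: "xs \<in> Fs" using xs unfolding Fs_def by simp
  obtain a b t where xs3: "xs = (a, b, t)" by (metis prod.collapse)
  obtain a' b' t' where x3: "x = (a', b', t')" by (metis prod.collapse)
  define x1 where "x1 = xs + Yv (a' - a) (b' - b) xs"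
  have x1F: "x1 \<in> Fs" unfolding x1_def by (rule inv[OF xsF])
  define t1 where "t1 = snd (snd x1)"
  have x1e: "x1 = (a', b', t1)" unfolding x1_def t1_def xs3 Yv_def by simp
  define w :: "real^'d" where "w = axis undefined 1"
  define w' where "w' = (- (t' - t1) / 4) *\<^sub>R w"
  define p1 where "p1 = x1 + Yv w 0 x1"
  define p2 where "p2 = p1 + Yv 0 w' p1"
  define p3 where "p3 = p2 + Yv (- w) 0 p2"
  define p4 where "p4 = p3 + Yv 0 (- w') p3"
  have "p4 \<in> Fs" unfolding p4_def p3_def p2_def p1_def by (intro inv x1F)
  moreover have "p4 = x"
    unfolding p4_def p3_def p2_def p1_def x1e x3 Yv_def w'_def
    by (simp add: inner_add_left inner_add_right inner_commute w_def inner_axis_axis algebra_simps)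
      (simp add: field_simps)
  ultimately have "x \<in> Fs" by simp
  then show ?thesis using le unfolding Fs_def by (simp add: order_antisym)
qed



declare split_paired_All[simp del] split_paired_Ex[simp del]

definition Sf :: "'d::finite heis \<Rightarrow> real" where
  "Sf x = fst x \<bullet> fst x + fst (snd x) \<bullet> fst (snd x)"
definition Pf :: "'d::finite heis \<Rightarrow> real" where
  "Pf x = Sf x * Sf x + snd (snd x) * snd (snd x)"
definition DSf :: "'d::finite heis \<Rightarrow> 'd heis \<Rightarrow> real" where
  "DSf x v = 2 * (fst x \<bullet> fst v) + 2 * (fst (snd x) \<bullet> fst (snd v))"
definition DPf :: "'d::finite heis \<Rightarrow> 'd heis \<Rightarrow> real" where
  "DPf x v = 2 * Sf x * DSf x v + 2 * snd (snd x) * snd (snd v)"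

lemma Sf_nonneg: "Sf x \<ge> 0" by (simp add: Sf_def)
lemma Pf_nonneg: "Pf x \<ge> 0" by (simp add: Pf_def)

lemma hnorm_P: "hnorm x = Pf x powr (1/4)"
  by (cases x) (simp add: hnorm_def Pf_def Sf_def power2_norm_eq_inner[symmetric] power2_eq_square)

lemma Sf_deriv: "(Sf has_derivative DSf x) (at x)"
  unfolding Sf_def DSf_def[abs_def]
  by (auto intro!: derivative_eq_intros simp: inner_commute)

lemma Pf_deriv: "(Pf has_derivative DPf x) (at x)"
  unfolding Pf_def[abs_def] DPf_def[abs_def]
  using Sf_deriv[of x]
  by (auto intro!: derivative_eq_intros simp: algebra_simps)

lemma Pf_C2: "C2 (Pf :: 'd::finite heis \<Rightarrow> real)"
proof -
  have S: "C2 (Sf :: 'd heis \<Rightarrow> real)"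
  proof -
    have e: "Sf = (\<lambda>x::'d heis. norm (fst x - 0) ^ 2 + norm ((\<lambda>x. fst (snd x)) x - 0) ^ 2)"
      by (simp add: fun_eq_iff Sf_def power2_norm_eq_inner)
    show ?thesis unfolding e
      by (intro C2_add C2_norm2 bounded_linear_fst bounded_linear_compose[OF bounded_linear_fst bounded_linear_snd])
  qed
  have t: "C2 (\<lambda>x::'d heis. snd (snd x))"
    by (intro C2_linear bounded_linear_compose[OF bounded_linear_snd bounded_linear_snd])
  show ?thesis unfolding Pf_def[abs_def] by (intro C2_add C2_mult S t)
qed


definition XP :: "('d::finite + 'd) \<Rightarrow> 'd heis \<Rightarrow> real" where
  "XP j y = (case j of
     Inl k \<Rightarrow> 4 * (Sf y * (fst y \<bullet> axis k 1) + snd (snd y) * (fst (snd y) \<bullet> axis k 1))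
   | Inr k \<Rightarrow> 4 * (Sf y * (fst (snd y) \<bullet> axis k 1) - snd (snd y) * (fst y \<bullet> axis k 1)))"

definition DXP :: "('d::finite + 'd) \<Rightarrow> 'd heis \<Rightarrow> 'd heis \<Rightarrow> real" where
  "DXP j x v = (case j of
     Inl k \<Rightarrow> 4 * (DSf x v * (fst x \<bullet> axis k 1) + Sf x * (fst v \<bullet> axis k 1)
                 + (snd (snd v) * (fst (snd x) \<bullet> axis k 1) + snd (snd x) * (fst (snd v) \<bullet> axis k 1)))
   | Inr k \<Rightarrow> 4 * (DSf x v * (fst (snd x) \<bullet> axis k 1) + Sf x * (fst (snd v) \<bullet> axis k 1)
                 - (snd (snd v) * (fst x \<bullet> axis k 1) + snd (snd x) * (fst v \<bullet> axis k 1))))"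

lemma Xop_P: "Xop j Pf = XP j"
proof -
  have "Xop j Pf = (\<lambda>y. DPf y (hfield j y))" by (rule Xop_fun[OF Pf_deriv])
  also have "\<dots> = XP j"
  proof
    fix y :: "'a heis"
    obtain a b t where y: "y = (a, b, t)" by (metis prod.collapse)
    show "DPf y (hfield j y) = XP j y"
      by (cases j) (simp_all add: y DPf_def DSf_def XP_def inner_axis algebra_simps)
  qed
  finally show ?thesis .
qed

lemma XP_deriv: "(XP j has_derivative DXP j x) (at x)"
proof (cases j)
  case (Inl k)
  show ?thesis unfolding Inl XP_def[abs_def] DXP_def[abs_def] using Sf_deriv[of x]
    by (auto intro!: derivative_eq_intros simp: algebra_simps)
next
  case (Inr k)
  show ?thesis unfolding Inr XP_def[abs_def] DXP_def[abs_def] using Sf_deriv[of x]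
    by (auto intro!: derivative_eq_intros simp: algebra_simps)
qed

lemma hhess_P: "hhess Pf x $ i $ j = DXP j x (hfield i x)"
  unfolding hhess_def Xop_P using Xop_eq[OF XP_deriv] by simp

lemma comp_bounds:
  fixes x :: "'d::finite heis"
  shows "\<bar>fst x \<bullet> axis k 1\<bar> \<le> sqrt (Sf x)" "\<bar>fst (snd x) \<bullet> axis k 1\<bar> \<le> sqrt (Sf x)"
    "Sf x \<le> sqrt (Pf x)" "\<bar>snd (snd x)\<bar> \<le> sqrt (Pf x)"
proof -
  have "\<bar>fst x $ k\<bar> \<le> norm (fst x)" by (rule component_le_norm_cart)
  also have "\<dots> = sqrt (fst x \<bullet> fst x)" by (simp add: norm_eq_sqrt_inner)
  also have "\<dots> \<le> sqrt (Sf x)" unfolding Sf_def by simp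
  finally show "\<bar>fst x \<bullet> axis k 1\<bar> \<le> sqrt (Sf x)" by (simp add: inner_axis)
  have "\<bar>fst (snd x) $ k\<bar> \<le> norm (fst (snd x))" by (rule component_le_norm_cart)
  also have "\<dots> = sqrt (fst (snd x) \<bullet> fst (snd x))" by (simp add: norm_eq_sqrt_inner)
  also have "\<dots> \<le> sqrt (Sf x)" unfolding Sf_def by simp
  finally show "\<bar>fst (snd x) \<bullet> axis k 1\<bar> \<le> sqrt (Sf x)" by (simp add: inner_axis)
  show "Sf x \<le> sqrt (Pf x)" unfolding Pf_def using Sf_nonneg[of x]
    by (intro real_le_rsqrt) (simp add: power2_eq_square)
  show "\<bar>snd (snd x)\<bar> \<le> sqrt (Pf x)" unfolding Pf_def
    by (rule real_le_rsqrt) (simp add: power2_eq_square)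
qed

lemma hfield_bounds:
  fixes x :: "'d::finite heis" and i :: "'d + 'd"
  defines "v \<equiv> hfield i x"
  shows "\<bar>fst v \<bullet> axis k 1\<bar> \<le> 1" "\<bar>fst (snd v) \<bullet> axis k 1\<bar> \<le> 1"
    "\<bar>snd (snd v)\<bar> \<le> 2 * sqrt (Sf x)" "\<bar>DSf x v\<bar> \<le> 2 * sqrt (Sf x)"
proof -
  obtain a b t where x: "x = (a, b, t)" by (metis prod.collapse)
  note cb = comp_bounds[of x]
  show "\<bar>fst v \<bullet> axis k 1\<bar> \<le> 1" unfolding v_def x by (cases i) (auto simp: inner_axis_axis)
  show "\<bar>fst (snd v) \<bullet> axis k 1\<bar> \<le> 1" unfolding v_def x by (cases i) (auto simp: inner_axis_axis)
  show "\<bar>snd (snd v)\<bar> \<le> 2 * sqrt (Sf x)"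
  proof (cases i)
    case (Inl j) then show ?thesis using cb(2)[of j] unfolding v_def x by (simp add: inner_axis abs_mult)
  next
    case (Inr j) then show ?thesis using cb(1)[of j] unfolding v_def x by (simp add: inner_axis abs_mult)
  qed
  show "\<bar>DSf x v\<bar> \<le> 2 * sqrt (Sf x)"
  proof (cases i)
    case (Inl j) then show ?thesis using cb(1)[of j] unfolding v_def x by (simp add: DSf_def inner_axis abs_mult)
  next
    case (Inr j) then show ?thesis using cb(2)[of j] unfolding v_def x by (simp add: DSf_def inner_axis abs_mult)
  qed
qed

lemma arith_bound:
  fixes zA za zc zB zb zd zs zS zq zt :: real
  assumes "\<bar>zA\<bar> \<le> 2*zs" "\<bar>za\<bar> \<le> zs" "\<bar>zc\<bar> \<le> 1" "\<bar>zB\<bar> \<le> 2*zs" "\<bar>zb\<bar> \<le> zs" "\<bar>zd\<bar> \<le> 1"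
    "zS = zs*zs" "zS \<le> zq" "\<bar>zt\<bar> \<le> zq" "zs \<ge> 0" "zS \<ge> 0"
  shows "\<bar>zA*za + zS*zc + (zB*zb + zt*zd)\<bar> \<le> 6*zq" "\<bar>zA*za + zS*zc - (zB*zb + zt*zd)\<bar> \<le> 6*zq"
proof -
  have "\<bar>zA\<bar> * \<bar>za\<bar> \<le> (2*zs) * zs" using assms by (intro mult_mono) auto
  then have 1: "\<bar>zA*za\<bar> \<le> 2*zS" using assms(7) by (simp add: abs_mult)
  have "\<bar>zB\<bar> * \<bar>zb\<bar> \<le> (2*zs) * zs" using assms by (intro mult_mono) auto
  then have 3: "\<bar>zB*zb\<bar> \<le> 2*zS" using assms(7) by (simp add: abs_mult)
  have "\<bar>zS\<bar> * \<bar>zc\<bar> \<le> zS * 1" using assms by (intro mult_mono) auto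
  then have 2: "\<bar>zS*zc\<bar> \<le> zS" by (simp add: abs_mult)
  have "\<bar>zt\<bar> * \<bar>zd\<bar> \<le> zq * 1" using assms by (intro mult_mono) auto
  then have 4: "\<bar>zt*zd\<bar> \<le> zq" by (simp add: abs_mult)
  have t1: "\<bar>zA*za + zS*zc + (zB*zb + zt*zd)\<bar> \<le> \<bar>zA*za\<bar> + \<bar>zS*zc\<bar> + (\<bar>zB*zb\<bar> + \<bar>zt*zd\<bar>)"
    by (rule order_trans[OF abs_triangle_ineq add_mono[OF abs_triangle_ineq abs_triangle_ineq]])
  have t2: "\<bar>zA*za + zS*zc - (zB*zb + zt*zd)\<bar> \<le> \<bar>zA*za\<bar> + \<bar>zS*zc\<bar> + (\<bar>zB*zb\<bar> + \<bar>zt*zd\<bar>)"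
    by (rule order_trans[OF abs_triangle_ineq4 add_mono[OF abs_triangle_ineq abs_triangle_ineq]])
  show "\<bar>zA*za + zS*zc + (zB*zb + zt*zd)\<bar> \<le> 6*zq" using t1 1 2 3 4 assms(8) by linarith
  show "\<bar>zA*za + zS*zc - (zB*zb + zt*zd)\<bar> \<le> 6*zq" using t2 1 2 3 4 assms(8) by linarith
qed

lemma hhess_P_bound: "\<bar>hhess Pf x $ i $ j\<bar> \<le> 24 * sqrt (Pf x)"
proof -
  define s where "s = sqrt (Sf x)"
  have s: "s \<ge> 0" "Sf x = s * s" unfolding s_def using Sf_nonneg[of x] by (auto simp: real_sqrt_mult[symmetric])
  note cb = comp_bounds[of x, folded s_def] and hb = hfield_bounds[where x=x and i=i, folded s_def]
  show ?thesis
  proof (cases j)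
    case (Inl k)
    have "\<bar>DSf x (hfield i x) * (fst x \<bullet> axis k 1) + Sf x * (fst (hfield i x) \<bullet> axis k 1)
       + (snd (snd (hfield i x)) * (fst (snd x) \<bullet> axis k 1) + snd (snd x) * (fst (snd (hfield i x)) \<bullet> axis k 1))\<bar>
       \<le> 6 * sqrt (Pf x)"
      by (rule arith_bound(1)) (use cb hb s Sf_nonneg[of x] in auto)
    then show ?thesis unfolding hhess_P Inl DXP_def by (simp add: abs_mult)
  next
    case (Inr k)
    have "\<bar>DSf x (hfield i x) * (fst (snd x) \<bullet> axis k 1) + Sf x * (fst (snd (hfield i x)) \<bullet> axis k 1)
       - (snd (snd (hfield i x)) * (fst x \<bullet> axis k 1) + snd (snd x) * (fst (hfield i x) \<bullet> axis k 1))\<bar>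
       \<le> 6 * sqrt (Pf x)"
      by (rule arith_bound(2)) (use cb hb s Sf_nonneg[of x] in auto)
    then show ?thesis unfolding hhess_P Inr DXP_def by (simp add: abs_mult)
  qed
qed

lemma XP_bound: "\<bar>XP j x\<bar> \<le> 8 * sqrt (Pf x) * sqrt (Sf x)"
proof -
  define s where "s = sqrt (Sf x)"
  define q where "q = sqrt (Pf x)"
  have s: "s \<ge> 0" unfolding s_def using Sf_nonneg[of x] by simp
  note cb = comp_bounds[of x, folded s_def q_def]
  have m1: "\<bar>Sf x * c\<bar> \<le> q * s" if "\<bar>c\<bar> \<le> s" for c
    using cb(3) that Sf_nonneg[of x] s by (simp add: abs_mult mult_mono)
  have m2: "\<bar>snd (snd x) * c\<bar> \<le> q * s" if "\<bar>c\<bar> \<le> s" for c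
    using cb(4) that s by (simp add: abs_mult mult_mono)
  show ?thesis
  proof (cases j)
    case (Inl k)
    have "\<bar>Sf x * (fst x \<bullet> axis k 1) + snd (snd x) * (fst (snd x) \<bullet> axis k 1)\<bar> \<le> 2 * (q * s)"
      using order_trans[OF abs_triangle_ineq add_mono[OF m1[OF cb(1)[of k]] m2[OF cb(2)[of k]]]] by simp
    then show ?thesis unfolding XP_def Inl s_def q_def by simp
  next
    case (Inr k)
    have "\<bar>Sf x * (fst (snd x) \<bullet> axis k 1) - snd (snd x) * (fst x \<bullet> axis k 1)\<bar> \<le> 2 * (q * s)"
      using order_trans[OF abs_triangle_ineq4 add_mono[OF m1[OF cb(2)[of k]] m2[OF cb(1)[of k]]]] by simp
    then show ?thesis unfolding XP_def Inr s_def q_def by simp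
  qed
qed



declare split_paired_All[simp del] split_paired_Ex[simp del]

definition psi :: "'d::finite heis \<Rightarrow> real" where "psi y = ln (1 + Pf y) / 4"
definition F1p :: "real \<Rightarrow> real" where "F1p s = 1 / (4 * (1 + s))"
definition F2p :: "real \<Rightarrow> real" where "F2p s = - 1 / (4 * (1 + s)^2)"

lemma Fp_d1: "t \<in> {-1/2<..} \<Longrightarrow> ((\<lambda>s. ln (1 + s) / 4) has_real_derivative F1p t) (at t)"
  unfolding F1p_def by (auto intro!: derivative_eq_intros simp: field_simps)
lemma Fp_d2: assumes "t \<in> {-1/2<..}" shows "(F1p has_real_derivative F2p t) (at t)"
proof -
  have t: "1 + t \<noteq> 0" using assms by simp
  have e: "(4 + 4 * t) * (4 + 4 * t) = 4 * (4 * (1 + t)^2)" by (simp add: power2_eq_square algebra_simps)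
  show ?thesis unfolding F1p_def[abs_def] F2p_def
    apply (auto intro!: derivative_eq_intros)
    using t apply simp
    apply (subst e)
    using t by simp
qed
lemma Fp_c2: "continuous_on {-1/2<..} F2p"
  unfolding F2p_def[abs_def] by (intro continuous_intros) (auto simp: add_nonneg_eq_0_iff)

lemma P_in: "Pf y \<in> {-1/2<..}" using Pf_nonneg[of y] by simp

lemma psi_C2: "C2 (psi :: 'd::finite heis \<Rightarrow> real)"
  unfolding psi_def[abs_def]
  by (rule C2_comp[OF Pf_C2 open_greaterThan P_in Fp_d1 Fp_d2 Fp_c2])

lemma psi_hhess: "hhess psi x = (\<chi> i j. F1p (Pf x) * hhess Pf x $ i $ j + F2p (Pf x) * (XP i x * XP j x))"
proof -
  have "hhess (\<lambda>y. ln (1 + Pf y) / 4) x = (\<chi> i j. F1p (Pf x) * hhess Pf x $ i $ j + F2p (Pf x) * (Xop i Pf x * Xop j Pf x))"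
    by (rule hhess_comp[OF C2_differentiable[OF Pf_C2] C2_Xop_differentiable[OF Pf_C2] P_in Fp_d1 Fp_d2])
  then show ?thesis unfolding psi_def[abs_def] Xop_P by simp
qed

lemma psi_deriv: "(psi has_derivative (\<lambda>v. DPf x v * F1p (Pf x))) (at x)"
  unfolding psi_def[abs_def] by (rule DERIV_compose_FDERIV[OF Fp_d1[OF P_in] Pf_deriv])

lemma psi_hess_bound:
  assumes P1: "Pf x \<ge> 1"
  shows "\<bar>hhess psi x $ i $ j\<bar> \<le> 22 / sqrt (Pf x)"
proof -
  define P where "P = Pf x"
  define q where "q = sqrt P"
  have P0: "P \<ge> 1" using P1 unfolding P_def .
  have q1: "q \<ge> 1" unfolding q_def using P0 by simp
  have qq: "q * q = P" unfolding q_def using P0 by simp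
  have S: "Sf x \<le> q" using comp_bounds(3)[of x] unfolding q_def P_def .
  have H: "\<bar>hhess Pf x $ i $ j\<bar> \<le> 24 * q" using hhess_P_bound[of x i j] unfolding q_def P_def .
  define sv where "sv = sqrt (Sf x)"
  have sv0: "sv \<ge> 0" "sv * sv = Sf x" unfolding sv_def using Sf_nonneg[of x] by auto
  have X: "\<bar>XP i x * XP j x\<bar> \<le> 64 * q * q * q"
  proof -
    have "\<bar>XP i x\<bar> \<le> 8 * q * sv" "\<bar>XP j x\<bar> \<le> 8 * q * sv"
      using XP_bound[of i x] XP_bound[of j x] unfolding q_def P_def sv_def by auto
    then have "\<bar>XP i x\<bar> * \<bar>XP j x\<bar> \<le> (8 * q * sv) * (8 * q * sv)" by (intro mult_mono) auto
    also have "\<dots> = 64 * q * q * (sv * sv)" by simp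
    also have "\<dots> \<le> 64 * q * q * q" using S sv0 q1 by (intro mult_left_mono) auto
    finally show ?thesis by (simp add: abs_mult)
  qed
  have f1: "\<bar>F1p P\<bar> \<le> 1 / (4 * (q * q))"
    unfolding F1p_def qq using P0 by (simp add: frac_le)
  have f2: "\<bar>F2p P\<bar> \<le> 1 / (4 * (q * q) * (q * q))"
  proof -
    have "(q * q) * (q * q) \<le> (1 + P)^2" unfolding qq using P0 by (simp add: power2_eq_square mult_mono)
    then show ?thesis unfolding F2p_def using P0 q1 by (simp add: frac_le)
  qed
  have a1: "\<bar>F1p P * hhess Pf x $ i $ j\<bar> \<le> 6 / q"
  proof -
    have "\<bar>F1p P\<bar> * \<bar>hhess Pf x $ i $ j\<bar> \<le> (1 / (4 * (q * q))) * (24 * q)" using f1 H by (intro mult_mono) auto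
    also have "\<dots> = 6 / q" using q1 by (simp add: field_simps)
    finally show ?thesis by (simp add: abs_mult)
  qed
  have a2: "\<bar>F2p P * (XP i x * XP j x)\<bar> \<le> 16 / q"
  proof -
    have "\<bar>F2p P\<bar> * \<bar>XP i x * XP j x\<bar> \<le> (1 / (4 * (q * q) * (q * q))) * (64 * q * q * q)" using f2 X by (intro mult_mono) auto
    also have "\<dots> = 16 / q" using q1 by (simp add: field_simps)
    finally show ?thesis by (simp add: abs_mult)
  qed
  have "\<bar>F1p P * hhess Pf x $ i $ j + F2p P * (XP i x * XP j x)\<bar> \<le> 6 / q + 16 / q"
    using order_trans[OF abs_triangle_ineq add_mono[OF a1 a2]] .
  then show ?thesis unfolding psi_hhess q_def P_def by simp
qed



declare split_paired_All[simp del] split_paired_Ex[simp del]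

lemma sq_mono_aux: "go \<le> (c::real) \<Longrightarrow> go * (y * y) \<le> y * (c * y)"
proof -
  assume "go \<le> c"
  then have "go * (y * y) \<le> c * (y * y)" by (intro mult_right_mono) auto
  then show ?thesis by (simp add: algebra_simps)
qed

lemma DPf_gscale:
  assumes g: "\<And>k. go \<le> g1 k" "\<And>k. go \<le> g2 k" "go \<le> g3" "go > 0"
  shows "DPf x (gscale g1 g2 g3 x) \<ge> 2 * go * Pf x"
proof -
  obtain a b t where x: "x = (a, b, t)" by (metis prod.collapse)
  have ia: "a \<bullet> (\<chi> k. g1 k * a $ k) \<ge> go * (a \<bullet> a)"
    unfolding inner_vec_def by (simp add: sum_distrib_left) (intro sum_mono sq_mono_aux g)
  have ib: "b \<bullet> (\<chi> k. g2 k * b $ k) \<ge> go * (b \<bullet> b)"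
    unfolding inner_vec_def by (simp add: sum_distrib_left) (intro sum_mono sq_mono_aux g)
  define S where "S = a \<bullet> a + b \<bullet> b"
  have S0: "S \<ge> 0" unfolding S_def by simp
  have DS: "DSf x (gscale g1 g2 g3 x) \<ge> 2 * go * S"
    unfolding DSf_def x gscale_def S_def using ia ib by (simp add: algebra_simps)
  define D where "D = DSf x (gscale g1 g2 g3 x)"
  have SS: "Sf x = S" unfolding Sf_def x S_def by simp
  have A: "2 * S * D \<ge> 2 * S * (2 * go * S)"
    using DS S0 unfolding D_def by (intro mult_left_mono) auto
  have B: "2 * t * (g3 * t) \<ge> 2 * go * (t * t)"
  proof -
    have "go * (t * t) \<le> g3 * (t * t)" using g by (intro mult_right_mono) auto
    then show ?thesis by (simp add: algebra_simps)
  qed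
  have E: "DPf x (gscale g1 g2 g3 x) = 2 * S * D + 2 * t * (g3 * t)"
    unfolding DPf_def D_def SS[symmetric] by (simp add: x gscale_def)
  have F: "2 * S * (2 * go * S) + 2 * go * (t * t) \<ge> 2 * go * Pf x"
  proof -
    have "Pf x = S * S + t * t" unfolding Pf_def SS by (simp add: x)
    moreover have "go * (S * S) \<ge> 0" using g S0 by simp
    ultimately show ?thesis by (simp add: algebra_simps)
  qed
  show ?thesis using A B E F by linarith
qed


lemma drift_psi:
  assumes g: "\<And>k. go \<le> g1 k" "\<And>k. go \<le> g2 k" "go \<le> g3" "go > 0"
    and P1: "Pf x \<ge> 1"
    and dr: "frechet_derivative hnorm (at x) v
      \<le> - frechet_derivative hnorm (at x) (gscale g1 g2 g3 x) + (go/8) / hnorm x ^ 3"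
  shows "v \<bullet> egrad psi x \<le> - go / 8"
proof -
  define P where "P = Pf x"
  have Ppos: "P > 0" using P1 unfolding P_def by simp
  define Q where "Q = P powr (3/4)"
  have Qpos: "Q > 0" unfolding Q_def using Ppos by simp
  have hn: "hnorm = (\<lambda>y. Pf y powr (1/4))" by (rule ext) (simp add: hnorm_P)
  have hd: "((\<lambda>y. Pf y powr (1/4)) has_derivative (\<lambda>w. DPf x w * ((1/4) * Pf x powr (1/4 - 1)))) (at x)"
    by (rule DERIV_compose_FDERIV[OF has_real_derivative_powr Pf_deriv]) (use Ppos P_def in simp)
  have c: "Pf x powr (1/4 - 1) = 1 / Q"
  proof -
    have "(1/4 - 1::real) = - (3/4)" by simp
    then show ?thesis unfolding Q_def P_def by (simp add: powr_minus_divide)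
  qed
  have fd: "frechet_derivative hnorm (at x) w = DPf x w * (1 / (4 * Q))" for w
    using frechet_derivative_at[OF hd] unfolding hn[symmetric] c by (metis mult.left_neutral times_divide_times_eq mult.commute)
  have h3: "hnorm x ^ 3 = Q"
    unfolding hnorm_P Q_def P_def using Ppos P_def by (simp add: powr_power)
  have i1: "DPf x v * (1 / (4 * Q)) \<le> - (DPf x (gscale g1 g2 g3 x) * (1 / (4 * Q))) + (go/8) / Q"
    using dr unfolding fd h3 .
  then have i2: "DPf x v \<le> - DPf x (gscale g1 g2 g3 x) + go / 2"
    using Qpos by (simp add: field_simps)
  have gs: "DPf x (gscale g1 g2 g3 x) \<ge> 2 * go * Pf x" by (rule DPf_gscale) (use g in auto)
  have i3: "DPf x v \<le> - 2 * go * P + go / 2"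
    using i2 gs unfolding P_def by linarith
  have eg: "v \<bullet> egrad psi x = DPf x v * F1p P"
    using egrad_inner[OF psi_deriv, of x v] unfolding P_def by (simp add: inner_commute)
  have "go * P \<ge> go" using P1 g(4) unfolding P_def by simp
  moreover have "- 2 * go * P + go / 2 = - 2 * (go * P) + go / 2" by simp
  moreover have "- go / 8 * (4 * (1 + P)) = - go / 2 - (go * P) / 2" by (simp add: algebra_simps)
  ultimately have i4: "- 2 * go * P + go / 2 \<le> - go / 8 * (4 * (1 + P))" using g(4) by linarith
  have "v \<bullet> egrad psi x = DPf x v / (4 * (1 + P))" unfolding eg F1p_def by simp
  also have "\<dots> \<le> (- 2 * go * P + go / 2) / (4 * (1 + P))" using i3 Ppos by (intro divide_right_mono) auto
  also have "\<dots> \<le> - go / 8" using i4 Ppos by (simp add: divide_le_eq)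
  finally show ?thesis .
qed



declare split_paired_All[simp del] split_paired_Ex[simp del]

lemma Pf_cont: "continuous_on UNIV Pf"
  using Pf_deriv by (meson continuous_at_imp_continuous_on has_derivative_continuous)

lemma psi_cont: "continuous_on UNIV psi"
  using psi_deriv by (meson continuous_at_imp_continuous_on has_derivative_continuous)

lemma norm_Pf: "norm x ^ 2 \<le> sqrt (Pf x) + Pf x"
proof -
  obtain a b t where x: "x = (a, b, t)" by (metis prod.collapse)
  have "norm x ^ 2 = Sf x + snd (snd x) ^ 2"
    unfolding x Sf_def by (simp add: norm_Pair power2_norm_eq_inner)
  moreover have "Sf x \<le> sqrt (Pf x)" by (rule comp_bounds(3))
  moreover have "snd (snd x) ^ 2 \<le> Pf x" unfolding Pf_def by (simp add: power2_eq_square)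
  ultimately show ?thesis by linarith
qed

lemma far: "\<exists>T. \<forall>x. norm x \<ge> T \<longrightarrow> Pf x \<ge> Q"
proof -
  define Q' where "Q' = max Q 0"
  define T where "T = sqrt (sqrt Q' + Q') + 1"
  have "Pf x \<ge> Q" if "norm x \<ge> T" for x
  proof (rule ccontr)
    assume "\<not> Pf x \<ge> Q"
    then have "Pf x \<le> Q'" unfolding Q'_def by simp
    then have "norm x ^ 2 \<le> sqrt Q' + Q'" using norm_Pf[of x] by (smt (verit) real_sqrt_le_iff)
    then have "norm x \<le> sqrt (sqrt Q' + Q')" by (simp add: real_le_rsqrt)
    then show False using that unfolding T_def by simp
  qed
  then show ?thesis by blast
qed

lemma K0_compact: "compact {x::'d::finite heis. Pf x \<le> Q}"
proof (subst compact_eq_bounded_closed, intro conjI)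
  show "closed {x::'d heis. Pf x \<le> Q}"
    by (rule closed_Collect_le[OF Pf_cont continuous_on_const])
  obtain T where T: "\<forall>x::'d heis. norm x \<ge> T \<longrightarrow> Pf x \<ge> Q + 1" using far by blast
  show "bounded {x::'d heis. Pf x \<le> Q}"
    unfolding bounded_iff
  proof (intro exI[of _ T] ballI)
    fix x :: "'d heis" assume "x \<in> {x. Pf x \<le> Q}"
    then have "Pf x \<le> Q" by simp
    then show "norm x \<le> T" using T by (meson add_le_same_cancel1 le_cases not_one_le_zero order_trans) 
  qed
qed


lemma core:
  fixes u :: "'d::finite heis \<Rightarrow> real" and b :: "'a \<Rightarrow> 'd heis \<Rightarrow> 'd heis"
  assumes lL: "0 < l" "l \<le> L" and kp: "KP l L b u" and uu: "usc u"
    and growth: "\<forall>e>0. eventually (\<lambda>x. u x / ln (hnorm x) \<le> e) at_infinity"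
    and bb: "\<forall>r. \<exists>B. \<forall>\<alpha> y. norm y \<le> r \<longrightarrow> norm (b \<alpha> y) \<le> B"
    and g: "\<And>k. go \<le> g1 k" "\<And>k. go \<le> g2 k" "go \<le> g3" "go > 0"
    and drift: "\<And>e. e > 0 \<Longrightarrow> \<exists>R. \<forall>x \<alpha>. hnorm x \<ge> R \<longrightarrow>
        frechet_derivative hnorm (at x) (b \<alpha> x)
          \<le> - frechet_derivative hnorm (at x) (gscale g1 g2 g3 x) + e / hnorm x ^ 3"
  shows "\<exists>k. \<forall>x. u x = k"
proof -
  obtain Rd where Rd: "\<forall>x \<alpha>. hnorm x \<ge> Rd \<longrightarrow>
        frechet_derivative hnorm (at x) (b \<alpha> x)
          \<le> - frechet_derivative hnorm (at x) (gscale g1 g2 g3 x) + (go/8) / hnorm x ^ 3"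
    using drift[of "go/8"] g(4) by auto
  define N where "N = real CARD('d + 'd)"
  have N1: "N \<ge> 1" unfolding N_def
  proof -
    have "CARD('d + 'd) > 0" by simp
    then show "1 \<le> real CARD('d + 'd)" by linarith
  qed
  define c where "c = 176 * L * N * N / go"
  have c0: "c \<ge> 0" unfolding c_def using lL g(4) N1 by simp
  define Q0 where "Q0 = max 1 (max ((max Rd 0) ^ 4) (c^2 + 1))"
  have Q01: "Q0 \<ge> 1" unfolding Q0_def by simp
  have hn_ge: "hnorm x \<ge> Rd" if "Pf x \<ge> Q0" for x
  proof (cases "Rd \<le> 0")
    case True then show ?thesis unfolding hnorm_P using powr_ge_zero[of "Pf x" "1/4"] by linarith
  next
    case False
    then have "Pf x \<ge> Rd ^ 4" using that unfolding Q0_def by simp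
    then have "Pf x powr (1/4) \<ge> (Rd ^ 4) powr (1/4)" using False by (intro powr_mono2) auto
    moreover have "(Rd ^ 4) powr (1/4) = Rd"
    proof -
      have "Rd ^ 4 = Rd powr (real 4)" using False by (subst powr_realpow) auto
      then have "(Rd ^ 4) powr (1/4) = Rd powr (real 4 * (1/4))" by (simp only: powr_powr)
      also have "\<dots> = Rd" using False by simp
      finally show ?thesis .
    qed
    ultimately show ?thesis unfolding hnorm_P by simp
  qed
  have small: "22 * L * N * N / sqrt (Pf x) < go / 8" if "Pf x \<ge> Q0" for x
  proof -
    have "Pf x > c^2" using that unfolding Q0_def by simp
    then have "sqrt (c^2) < sqrt (Pf x)" by (rule real_sqrt_less_mono)
    then have "sqrt (Pf x) > c" using c0 by simp
    then have "go * c < go * sqrt (Pf x)" using g(4) by simp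
    moreover have "go * c = 176 * L * N * N" unfolding c_def using g(4) by simp
    ultimately have "176 * L * N * N < go * sqrt (Pf x)" by simp
    moreover have "sqrt (Pf x) > 0" using that Q01 by simp
    ultimately show ?thesis by (simp add: field_simps)
  qed
  have strict: False if x0: "Pf x0 \<ge> Q0" and ep: "\<epsilon> > 0"
    and lm: "\<exists>e>0. \<forall>y. dist y x0 < e \<longrightarrow> u y - \<epsilon> * psi y \<le> u x0 - \<epsilon> * psi x0" for x0 \<epsilon>
  proof -
    define \<phi> where "\<phi> = (\<lambda>y::'d heis. \<epsilon> * psi y)"
    have C\<phi>: "C2 \<phi>" unfolding \<phi>_def by (rule C2_cmult[OF psi_C2])
    have H\<phi>: "hhess \<phi> x0 = (\<chi> i j. \<epsilon> * hhess psi x0 $ i $ j + 0 * (Xop i psi x0 * Xop j psi x0))"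
      unfolding \<phi>_def
      by (rule hhess_comp[OF C2_differentiable[OF psi_C2] C2_Xop_differentiable[OF psi_C2], of UNIV "\<lambda>s. \<epsilon> * s" "\<lambda>s. \<epsilon>" "\<lambda>s. 0"])
        (auto intro!: derivative_eq_intros)
    have d\<phi>: "(\<phi> has_derivative (\<lambda>v. \<epsilon> * (DPf x0 v * F1p (Pf x0)))) (at x0)"
      unfolding \<phi>_def by (rule has_derivative_mult_right[OF psi_deriv])
    have e\<phi>: "v \<bullet> egrad \<phi> x0 = \<epsilon> * (v \<bullet> egrad psi x0)" for v
      using egrad_inner[OF d\<phi>, of v] egrad_inner[OF psi_deriv, of x0 v] by (simp add: inner_commute)
    define m1 where "m1 = - (\<epsilon> * (L * (N * N * (22 / sqrt (Pf x0)))))"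
    define m2 where "m2 = \<epsilon> * (go / 8)"
    have h1: "\<forall>A\<in>ellipt_set l L. m1 \<le> - trace (A ** hhess \<phi> x0)"
    proof
      fix A :: "'d hmat" assume A: "A \<in> ellipt_set l L"
      have ent: "\<bar>hhess \<phi> x0 $ i $ k\<bar> \<le> \<epsilon> * (22 / sqrt (Pf x0))" for i k
      proof -
        have a: "\<bar>hhess psi x0 $ i $ k\<bar> \<le> 22 / sqrt (Pf x0)" using psi_hess_bound[of x0 i k] x0 Q01 by simp
        have "\<epsilon> * \<bar>hhess psi x0 $ i $ k\<bar> \<le> \<epsilon> * (22 / sqrt (Pf x0))"
          using a ep by (intro mult_left_mono) auto
        then show ?thesis unfolding H\<phi> using ep by (simp add: abs_mult)
      qed
      have "(\<Sum>i\<in>UNIV. \<Sum>k\<in>UNIV. \<bar>hhess \<phi> x0 $ i $ k\<bar>) \<le> (\<Sum>i\<in>(UNIV::('d+'d) set). \<Sum>k\<in>(UNIV::('d+'d) set). \<epsilon> * (22 / sqrt (Pf x0)))"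
        by (intro sum_mono ent)
      also have "\<dots> = N * N * (\<epsilon> * (22 / sqrt (Pf x0)))" unfolding N_def by simp
      finally have s: "(\<Sum>i\<in>UNIV. \<Sum>k\<in>UNIV. \<bar>hhess \<phi> x0 $ i $ k\<bar>) \<le> N * N * (\<epsilon> * (22 / sqrt (Pf x0)))" .
      have "\<bar>trace (A ** hhess \<phi> x0)\<bar> \<le> L * (\<Sum>i\<in>UNIV. \<Sum>k\<in>UNIV. \<bar>hhess \<phi> x0 $ i $ k\<bar>)"
        using E_trace_bound[OF A] lL by simp
      also have "\<dots> \<le> L * (N * N * (\<epsilon> * (22 / sqrt (Pf x0))))" using s lL by (intro mult_left_mono) auto
      finally have "\<bar>trace (A ** hhess \<phi> x0)\<bar> \<le> \<epsilon> * (L * (N * N * (22 / sqrt (Pf x0))))" by (simp add: algebra_simps)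
      then show "m1 \<le> - trace (A ** hhess \<phi> x0)" unfolding m1_def by (simp add: abs_le_iff)
    qed
    have h2: "\<forall>\<alpha>. m2 \<le> - (b \<alpha> x0 \<bullet> egrad \<phi> x0)"
    proof
      fix \<alpha>
      have "b \<alpha> x0 \<bullet> egrad psi x0 \<le> - go / 8"
        by (rule drift_psi[OF g]) (use x0 Q01 Rd hn_ge[OF x0] in auto)
      then have "\<epsilon> * (b \<alpha> x0 \<bullet> egrad psi x0) \<le> \<epsilon> * (- go / 8)" using ep by (intro mult_left_mono) auto
      then show "m2 \<le> - (b \<alpha> x0 \<bullet> egrad \<phi> x0)" unfolding e\<phi> m2_def by simp
    qed
    have "m1 + m2 \<le> 0" using kp C\<phi> lm h1 h2 unfolding KP_def \<phi>_def by blast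
    moreover have "m1 + m2 = \<epsilon> * (go / 8 - 22 * L * N * N / sqrt (Pf x0))"
      unfolding m1_def m2_def by (simp add: algebra_simps)
    moreover have "\<epsilon> * (go / 8 - 22 * L * N * N / sqrt (Pf x0)) > 0" using small[OF x0] ep by simp
    ultimately show False by simp
  qed
  define K0 where "K0 = {x::'d heis. Pf x \<le> Q0}"
  have K0c: "compact K0" unfolding K0_def by (rule K0_compact)
  have "0 \<in> K0" unfolding K0_def Pf_def Sf_def using Q01 by (simp add: zero_prod_def)
  then obtain xm where xm: "xm \<in> K0" "\<forall>y\<in>K0. u y \<le> u xm" using usc_max[OF uu K0c] by blast
  define m where "m = u xm"
  define \<psi>0 where "\<psi>0 = ln (1 + Q0) / 4"
  have ule: "u x \<le> m" for x
  proof (rule ccontr)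
    assume "\<not> u x \<le> m"
    then have ux: "u x > m" by simp
    have PxQ: "Pf x > Q0" using ux xm unfolding m_def K0_def by (meson mem_Collect_eq not_le)
    have psix: "psi x \<ge> \<psi>0" unfolding psi_def \<psi>0_def using PxQ Q01 by simp
    define D where "D = psi x - \<psi>0 + 1"
    have D: "D > 0" unfolding D_def using psix by simp
    define \<epsilon> where "\<epsilon> = (u x - m) / (2 * D)"
    have ep: "\<epsilon> > 0" unfolding \<epsilon>_def using ux D by simp
    have key: "u x - \<epsilon> * psi x > m - \<epsilon> * \<psi>0"
    proof -
      have "\<epsilon> * (psi x - \<psi>0) \<le> \<epsilon> * D" using ep unfolding D_def by simp
      also have "\<dots> = (u x - m) / 2" unfolding \<epsilon>_def using D by simp
      finally show ?thesis using ux by (simp add: algebra_simps)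
    qed
    obtain R1 where R1: "\<forall>y. norm y \<ge> R1 \<longrightarrow> u y / ln (hnorm y) \<le> \<epsilon> / 2"
    proof -
      have "\<epsilon> / 2 > 0" using ep by simp
      then have "eventually (\<lambda>x. u x / ln (hnorm x) \<le> \<epsilon> / 2) at_infinity" using growth by blast
      then show ?thesis using that unfolding eventually_at_infinity by blast
    qed
    define c0 where "c0 = 8 * (\<epsilon> * \<psi>0 - m) / \<epsilon>"
    define Qb where "Qb = max 2 (exp c0 + 1)"
    obtain T where T: "\<forall>y::'d heis. norm y \<ge> T \<longrightarrow> Pf y \<ge> Qb" using far by blast
    define T' where "T' = max T R1"
    have farb: "u y - \<epsilon> * psi y < m - \<epsilon> * \<psi>0" if "norm y \<ge> T'" for y
    proof -
      have nT: "norm y \<ge> T" "norm y \<ge> R1" using that unfolding T'_def by auto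
      have P2: "Pf y \<ge> Qb" using T nT by blast
      then have Pg: "Pf y > exp c0" "Pf y \<ge> 2" unfolding Qb_def by auto
      have "exp c0 < exp (ln (Pf y))" using Pg by simp
      then have lnP: "ln (Pf y) > c0" by simp
      have lnh: "ln (hnorm y) = ln (Pf y) / 4" unfolding hnorm_P using Pg by simp
      have lpos: "ln (Pf y) > 0" using Pg by simp
      have "u y / ln (hnorm y) \<le> \<epsilon> / 2" using R1 nT by blast
      then have uy: "u y \<le> \<epsilon> / 2 * (ln (Pf y) / 4)" using lpos unfolding lnh by (simp add: divide_le_eq)
      have "psi y \<ge> ln (Pf y) / 4" unfolding psi_def using Pg by simp
      then have "\<epsilon> * psi y \<ge> \<epsilon> * (ln (Pf y) / 4)" using ep by (intro mult_left_mono) auto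
      then have "u y - \<epsilon> * psi y \<le> - (\<epsilon> / 8 * ln (Pf y))" using uy by simp
      moreover have "\<epsilon> / 8 * ln (Pf y) > \<epsilon> / 8 * c0" using lnP ep by simp
      moreover have "\<epsilon> / 8 * c0 = \<epsilon> * \<psi>0 - m" unfolding c0_def using ep by simp
      ultimately show ?thesis by simp
    qed
    define C where "C = {y::'d heis. Q0 \<le> Pf y} \<inter> cball 0 T'"
    have Cc: "compact C" unfolding C_def
      by (intro closed_Int_compact closed_Collect_le[OF continuous_on_const Pf_cont] compact_cball)
    have xC: "x \<in> C"
    proof -
      have "norm x \<le> T'"
      proof (rule ccontr)
        assume "\<not> norm x \<le> T'"
        then show False using farb[of x] key by simp
      qed
      then show ?thesis unfolding C_def using PxQ by simp
    qed
    have uw: "usc (\<lambda>y. u y + - (\<epsilon> * psi y))"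
      by (rule usc_add_cont[OF uu]) (intro continuous_intros psi_cont)
    obtain x0 where x0: "x0 \<in> C" "\<forall>y\<in>C. u y + - (\<epsilon> * psi y) \<le> u x0 + - (\<epsilon> * psi x0)"
      using usc_max[OF uw Cc] xC by blast
    have "u x + - (\<epsilon> * psi x) \<le> u x0 + - (\<epsilon> * psi x0)" using x0(2) xC by blast
    then have w0: "u x0 - \<epsilon> * psi x0 > m - \<epsilon> * \<psi>0" using key by linarith
    have P0: "Pf x0 > Q0"
    proof (rule ccontr)
      assume "\<not> Pf x0 > Q0"
      then have "Pf x0 = Q0" using x0(1) unfolding C_def by simp
      then have "x0 \<in> K0" "psi x0 = \<psi>0" unfolding K0_def psi_def \<psi>0_def by auto
      then have "u x0 \<le> u xm" using xm(2) by blast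
      then show False using w0 \<open>psi x0 = \<psi>0\<close> unfolding m_def by simp
    qed
    have n0: "norm x0 < T'"
    proof (rule ccontr)
      assume "\<not> norm x0 < T'"
      then show False using farb[of x0] w0 by simp
    qed
    have "open ({y::'d heis. Q0 < Pf y} \<inter> ball 0 T')"
      by (intro open_Int open_ball open_Collect_less[OF continuous_on_const Pf_cont])
    moreover have "x0 \<in> {y::'d heis. Q0 < Pf y} \<inter> ball 0 T'" using P0 n0 by simp
    ultimately obtain e where e: "e > 0" "ball x0 e \<subseteq> {y::'d heis. Q0 < Pf y} \<inter> ball 0 T'"
      by (meson open_contains_ball)
    have "\<exists>e>0. \<forall>y. dist y x0 < e \<longrightarrow> u y - \<epsilon> * psi y \<le> u x0 - \<epsilon> * psi x0"
    proof (intro exI[of _ e] conjI allI impI)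
      fix y assume "dist y x0 < e"
      then have "y \<in> {y::'d heis. Q0 < Pf y} \<inter> ball 0 T'" using e by (auto simp: dist_commute)
      then have "y \<in> C" unfolding C_def by auto
      then have "u y + - (\<epsilon> * psi y) \<le> u x0 + - (\<epsilon> * psi x0)" using x0(2) by blast
      then show "u y - \<epsilon> * psi y \<le> u x0 - \<epsilon> * psi x0" by simp
    qed (use e in auto)
    then show False using strict[of x0 \<epsilon>] P0 ep by simp
  qed
  have "u x = m" for x
    by (rule smp[OF lL kp uu _ _ bb]) (use ule m_def in auto)
  then show ?thesis by blast
qed



declare split_paired_All[simp del] split_paired_Ex[simp del]

lemma b_bound:
  fixes b :: "'a \<Rightarrow> 'd::finite heis \<Rightarrow> 'd heis" and c :: "'a \<Rightarrow> 'd heis \<Rightarrow> real"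
  assumes Hi_fin: "\<And>x r p. bdd_below (range (\<lambda>\<alpha>. c \<alpha> x * r - b \<alpha> x \<bullet> p))"
    and b_lip: "\<And>R. R > 0 \<Longrightarrow> \<exists>K. \<forall>\<alpha> x y. norm x \<le> R \<longrightarrow> norm y \<le> R \<longrightarrow>
        norm (b \<alpha> x - b \<alpha> y) \<le> K * norm (x - y)"
  shows "\<forall>r. \<exists>B. \<forall>\<alpha> y. norm y \<le> r \<longrightarrow> norm (b \<alpha> y) \<le> B"
proof
  fix r :: real
  have ub: "\<exists>M. \<forall>\<alpha>. b \<alpha> 0 \<bullet> p \<le> M" for p
  proof -
    obtain m where "\<forall>\<alpha>. m \<le> c \<alpha> 0 * 0 - b \<alpha> 0 \<bullet> p" using Hi_fin[of 0 0 p] unfolding bdd_below_def by auto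
    then have "\<forall>\<alpha>. b \<alpha> 0 \<bullet> p \<le> - m" by (simp add: le_minus_iff)
    then show ?thesis by blast
  qed
  have "\<forall>i\<in>Basis. \<exists>M. \<forall>\<alpha>. \<bar>b \<alpha> 0 \<bullet> i\<bar> \<le> M"
  proof
    fix i :: "'d heis"
    obtain M1 where M1: "\<forall>\<alpha>. b \<alpha> 0 \<bullet> i \<le> M1" using ub by blast
    obtain M2 where M2: "\<forall>\<alpha>. b \<alpha> 0 \<bullet> (- i) \<le> M2" using ub by blast
    show "\<exists>M. \<forall>\<alpha>. \<bar>b \<alpha> 0 \<bullet> i\<bar> \<le> M"
    proof (intro exI[of _ "max M1 M2"] allI)
      fix \<alpha>
      have a: "b \<alpha> 0 \<bullet> i \<le> M1" using M1 by blast
      have "b \<alpha> 0 \<bullet> (- i) \<le> M2" using M2 by blast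
      then have c: "- (b \<alpha> 0 \<bullet> i) \<le> M2" by simp
      have d1: "b \<alpha> 0 \<bullet> i \<le> max M1 M2" by (rule order_trans[OF a max.cobounded1])
      have d2: "- (b \<alpha> 0 \<bullet> i) \<le> max M1 M2" by (rule order_trans[OF c max.cobounded2])
      show "\<bar>b \<alpha> 0 \<bullet> i\<bar> \<le> max M1 M2" using d1 d2 abs_le_iff by blast
    qed
  qed
  then obtain Mf where Mf: "\<forall>i\<in>Basis. \<forall>\<alpha>. \<bar>b \<alpha> 0 \<bullet> i\<bar> \<le> Mf i" by metis
  define B0 where "B0 = (\<Sum>i\<in>Basis. Mf i)"
  have B0: "norm (b \<alpha> 0) \<le> B0" for \<alpha>
  proof -
    have "norm (b \<alpha> 0) \<le> (\<Sum>i\<in>Basis. \<bar>b \<alpha> 0 \<bullet> i\<bar>)" by (rule norm_le_l1)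
    also have "\<dots> \<le> B0" unfolding B0_def using Mf by (intro sum_mono) auto
    finally show ?thesis .
  qed
  define r' where "r' = max r 1"
  obtain K where K: "\<forall>\<alpha> x y. norm x \<le> r' \<longrightarrow> norm y \<le> r' \<longrightarrow> norm (b \<alpha> x - b \<alpha> y) \<le> K * norm (x - y)"
  proof -
    have "r' > 0" unfolding r'_def by simp
    then show ?thesis using b_lip that by blast
  qed
  show "\<exists>B. \<forall>\<alpha> y. norm y \<le> r \<longrightarrow> norm (b \<alpha> y) \<le> B"
  proof (intro exI[of _ "B0 + \<bar>K\<bar> * r'"] allI impI)
    fix \<alpha> and y :: "'d heis" assume y: "norm y \<le> r"
    then have y': "norm y \<le> r'" unfolding r'_def by simp
    have z: "norm (0::'d heis) \<le> r'" unfolding r'_def by simp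
    have "norm (b \<alpha> y - b \<alpha> 0) \<le> K * norm (y - 0)" using K y' z by blast
    also have "\<dots> \<le> \<bar>K\<bar> * r'" using y' by (simp add: abs_mult mult_mono)
    finally have "norm (b \<alpha> y - b \<alpha> 0) \<le> \<bar>K\<bar> * r'" .
    then show "norm (b \<alpha> y) \<le> B0 + \<bar>K\<bar> * r'" using B0[of \<alpha>] norm_triangle_sub[of "b \<alpha> y" "b \<alpha> 0"] by linarith
  qed
qed

theorem corollary4p18:
  fixes G :: "'d::finite heis \<Rightarrow> real \<Rightarrow> 'd heis \<Rightarrow> 'd hmat \<Rightarrow> real"
    and l L :: real
    and b :: "'a \<Rightarrow> 'd heis \<Rightarrow> 'd heis"
    and c :: "'a \<Rightarrow> 'd heis \<Rightarrow> real"
    and g1 g2 :: "'d \<Rightarrow> real" and g3 :: real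
    and u v :: "'d heis \<Rightarrow> real"
  assumes lL: "0 < l" "l \<le> L"
    and G_ell: "\<And>x r p M N. symmetric_mat M \<Longrightarrow> symmetric_mat N \<Longrightarrow> psd N \<Longrightarrow>
        pucci_minus l L (M - N) \<le> G x r p M - G x r p N \<and>
        G x r p M - G x r p N \<le> pucci_plus l L (M - N)"
    and Hi_fin: "\<And>x r p. bdd_below (range (\<lambda>\<alpha>. c \<alpha> x * r - b \<alpha> x \<bullet> p))"
    and Hs_fin: "\<And>x r p. bdd_above (range (\<lambda>\<alpha>. c \<alpha> x * r - b \<alpha> x \<bullet> p))"
    and b_lip: "\<And>R. R > 0 \<Longrightarrow> \<exists>K. \<forall>\<alpha> x y. norm x \<le> R \<longrightarrow> norm y \<le> R \<longrightarrow>
        norm (b \<alpha> x - b \<alpha> y) \<le> K * norm (x - y)"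
    and c_nonneg: "\<And>\<alpha> x. 0 \<le> c \<alpha> x"
    and c_equicont: "\<And>R e. R > 0 \<Longrightarrow> e > 0 \<Longrightarrow> \<exists>\<delta>>0. \<forall>\<alpha> x y.
        norm x \<le> R \<longrightarrow> norm y \<le> R \<longrightarrow> norm (x - y) < \<delta> \<longrightarrow> \<bar>c \<alpha> x - c \<alpha> y\<bar> < e"
    and gamma_pos: "\<And>k. 0 < g1 k" "\<And>k. 0 < g2 k" "0 < g3"
    and drift: "\<And>e. e > 0 \<Longrightarrow> \<exists>R. \<forall>x \<alpha>. hnorm x \<ge> R \<longrightarrow>
        frechet_derivative hnorm (at x) (b \<alpha> x)
          \<le> - frechet_derivative hnorm (at x) (gscale g1 g2 g3 x) + e / hnorm x ^ 3"
  shows "((\<forall>x r p. G x r p 0 \<ge> (INF \<alpha>. c \<alpha> x * r - b \<alpha> x \<bullet> p)) \<and> visc_sub G u \<and>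
           (\<forall>e>0. eventually (\<lambda>x. u x / ln (hnorm x) \<le> e) at_infinity) \<and>
           ((\<forall>\<alpha> x. c \<alpha> x = 0) \<or> (\<forall>x. u x \<ge> 0))
          \<longrightarrow> (\<exists>k. \<forall>x. u x = k))
       \<and> ((\<forall>x r p. G x r p 0 \<le> (SUP \<alpha>. c \<alpha> x * r - b \<alpha> x \<bullet> p)) \<and> visc_super G v \<and>
           (\<forall>e>0. eventually (\<lambda>x. v x / ln (hnorm x) \<ge> - e) at_infinity) \<and>
           ((\<forall>\<alpha> x. c \<alpha> x = 0) \<or> (\<forall>x. v x \<le> 0))
          \<longrightarrow> (\<exists>k. \<forall>x. v x = k))"
proof -
  define go where "go = Min (range g1 \<union> range g2 \<union> {g3})"
  have fin: "finite (range g1 \<union> range g2 \<union> {g3})" by simp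
  have g1': "go \<le> g1 k" for k unfolding go_def by (rule Min_le[OF fin]) auto
  have g2': "go \<le> g2 k" for k unfolding go_def by (rule Min_le[OF fin]) auto
  have g3': "go \<le> g3" unfolding go_def by (rule Min_le[OF fin]) auto
  note g = g1' g2' g3'
  have "go \<in> range g1 \<union> range g2 \<union> {g3}" unfolding go_def using fin by (intro Min_in) auto
  then have gpos: "go > 0" using gamma_pos by auto
  have bb: "\<forall>r. \<exists>B. \<forall>\<alpha> y. norm y \<le> r \<longrightarrow> norm (b \<alpha> y) \<le> B"
    by (rule b_bound[OF Hi_fin b_lip])
  show ?thesis
  proof (intro conjI impI)
    assume A: "(\<forall>x r p. G x r p 0 \<ge> (INF \<alpha>. c \<alpha> x * r - b \<alpha> x \<bullet> p)) \<and> visc_sub G u \<and>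
           (\<forall>e>0. eventually (\<lambda>x. u x / ln (hnorm x) \<le> e) at_infinity) \<and>
           ((\<forall>\<alpha> x. c \<alpha> x = 0) \<or> (\<forall>x. u x \<ge> 0))"
    have A1: "\<forall>x r p. G x r p 0 \<ge> (INF \<alpha>. c \<alpha> x * r - b \<alpha> x \<bullet> p)" using A by blast
    have A2: "visc_sub G u" using A by blast
    have A3: "\<forall>e>0. eventually (\<lambda>x. u x / ln (hnorm x) \<le> e) at_infinity" using A by blast
    have cu: "0 \<le> c \<alpha> x * u x" for \<alpha> x using A c_nonneg[of \<alpha> x] by auto
    have kp: "KP l L b u" by (rule KP_sub[where c=c and b=b and u=u, OF lL G_ell A1 A2 cu])
    have uu: "usc u" using A2 unfolding visc_sub_def by blast
    show "\<exists>k. \<forall>x. u x = k"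
      by (rule core[OF lL kp uu A3 bb g gpos drift])
  next
    assume B: "(\<forall>x r p. G x r p 0 \<le> (SUP \<alpha>. c \<alpha> x * r - b \<alpha> x \<bullet> p)) \<and> visc_super G v \<and>
           (\<forall>e>0. eventually (\<lambda>x. v x / ln (hnorm x) \<ge> - e) at_infinity) \<and>
           ((\<forall>\<alpha> x. c \<alpha> x = 0) \<or> (\<forall>x. v x \<le> 0))"
    have cv: "c \<alpha> x * v x \<le> 0" for \<alpha> x using B c_nonneg[of \<alpha> x] by (auto simp: mult_nonneg_nonpos)
    have B1: "\<forall>x r p. G x r p 0 \<le> (SUP \<alpha>. c \<alpha> x * r - b \<alpha> x \<bullet> p)" using B by blast
    have B2: "visc_super G v" using B by blast
    have kp: "KP l L b (\<lambda>x. - v x)" by (rule KP_super[where c=c and b=b and v=v, OF lL G_ell B1 B2 cv])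
    have uu: "usc (\<lambda>x. - v x)" using B unfolding visc_super_def lsc_def usc_def by (smt (verit))
    have gr: "\<forall>e>0. eventually (\<lambda>x. - v x / ln (hnorm x) \<le> e) at_infinity"
    proof (intro allI impI)
      fix e :: real assume "e > 0"
      then have "eventually (\<lambda>x. v x / ln (hnorm x) \<ge> - e) at_infinity" using B by blast
      then show "eventually (\<lambda>x. - v x / ln (hnorm x) \<le> e) at_infinity"
        by (rule eventually_mono) (simp add: minus_divide_left[symmetric])
    qed
    obtain k where "\<forall>x. - v x = k" using core[OF lL kp uu gr bb g gpos drift] by blast
    then show "\<exists>k. \<forall>x. v x = k" by (intro exI[of _ "- k"]) auto
  qed
qed


end
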